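(* Let $(\bm\gamma,\Pi)\in\mathfrak{C}$, $N_0>0$, let $\xi$ be a Poisson point process on $[0,\infty)\times\mathcal{Z}\times[0,1]^{\mathbb{N}}$ with intensity $\mathrm{d}t\otimes\Pi(\mathrm{d}\bm z)\otimes\mathrm{d}\mathsf{u}$ (with $\mathrm{d}\mathsf{u}$ the product uniform measure) and points $(t_i,\bm z^i,\mathsf{u}^i)$, and let $N$ be the unique strong solution of $N_t=N_0+\int_0^t(\gamma_b-\gamma_dN_s)\,\mathrm{d}s+\int_{[0,t]\times\mathcal{Z}\times[0,1]^{\mathbb{N}}}(z_b-z_dN_{s-})\,\xi(\mathrm{d}s,\mathrm{d}\bm z,\mathrm{d}\mathsf{u})$. Set $\overline{\bm z}_i:=\frac{z_b^i}{(1-z_d^i)N_{t_i-}+z_b^i}$. Then for every $t\ge0$, the sum $\sum_{i:t_i\le t}\overline{\bm z}_i$ is almost surely finite.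
   Context: Event space $\mathcal{Z}:=\big([0,1]\times[0,\infty)\big)\setminus\{(0,0),(1,0)\}$, elements $\bm z=(z_d,z_b)$. Characteristics $\mathfrak{C}$: pairs $(\bm\gamma,\Pi)$ with $\bm\gamma=(\gamma_d,\gamma_b)\in[0,\infty)^2$, $\Pi$ a $\sigma$-finite measure on $\mathcal{Z}$ with $\int z_d\,\mathrm{d}\Pi<\infty$, $\int z_b\,\mathrm{d}\Pi<\infty$, $\gamma_d+\int z_d\,\mathrm{d}\Pi=\gamma_b+\int z_b\,\mathrm{d}\Pi$. *)

theory Defs
  imports "HOL-Probability.Probability"
begin

text \<open>The event space Z = ([0,1] x [0,oo)) minus {(0,0),(1,0)}; an element is (z_d, z_b).\<close>
definition Zset :: "(real \<times> real) set" where
  "Zset = ({0..1} \<times> {0..}) - {(0,0),(1,0)}"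

text \<open>Characteristics (gamma, Pi): gamma = (gamma_d, gamma_b), Pi a sigma-finite measure on the
  Borel sets of Z with finite first moments and the balance condition.\<close>
definition characteristic :: "real \<times> real \<Rightarrow> (real \<times> real) measure \<Rightarrow> bool" where
  "characteristic \<gamma> Pm \<longleftrightarrow>
     fst \<gamma> \<ge> 0 \<and> snd \<gamma> \<ge> 0 \<and>
     sets Pm = sets (restrict_space borel Zset) \<and>
     sigma_finite_measure Pm \<and>
     integrable Pm fst \<and> integrable Pm snd \<and>
     fst \<gamma> + (\<integral>z. fst z \<partial>Pm) = snd \<gamma> + (\<integral>z. snd z \<partial>Pm)"

text \<open>A Poisson point process on the measure space mu, defined on the probability space M,
  represented by its (random) set of points xi(omega).\<close>
definition poisson_point_process :: "'w measure \<Rightarrow> 'a measure \<Rightarrow> ('w \<Rightarrow> 'a set) \<Rightarrow> bool" where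
  "poisson_point_process M \<mu> \<xi> \<longleftrightarrow>
     prob_space M \<and>
     (\<forall>\<omega>\<in>space M. \<xi> \<omega> \<subseteq> space \<mu>) \<and>
     (\<forall>A\<in>sets \<mu>. emeasure \<mu> A < \<infinity> \<longrightarrow>
        (AE \<omega> in M. finite (\<xi> \<omega> \<inter> A)) \<and>
        (\<lambda>\<omega>. card (\<xi> \<omega> \<inter> A)) \<in> measurable M (count_space UNIV) \<and>
        (\<forall>k::nat. measure M {\<omega>\<in>space M. card (\<xi> \<omega> \<inter> A) = k}
                   = measure \<mu> A ^ k / fact k * exp (- measure \<mu> A))) \<and>
     (\<forall>(n::nat) A. (\<forall>i<n. A i \<in> sets \<mu> \<and> emeasure \<mu> (A i) < \<infinity>) \<and> disjoint_family_on A {..<n}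
        \<longrightarrow> prob_space.indep_vars M (\<lambda>_. count_space UNIV) (\<lambda>i \<omega>. card (\<xi> \<omega> \<inter> A i)) {..<n})"

definition left_lim :: "(real \<Rightarrow> real) \<Rightarrow> real \<Rightarrow> real" where
  "left_lim f t = (if t \<le> 0 then f 0 else Lim (at_left t) f)"

definition cadlag_on_nonneg :: "(real \<Rightarrow> real) \<Rightarrow> bool" where
  "cadlag_on_nonneg f \<longleftrightarrow>
     (\<forall>t\<ge>0. continuous (at_right t) f) \<and> (\<forall>t>0. \<exists>l. (f \<longlongrightarrow> l) (at_left t))"

text \<open>Points of xi: (t, z, u) with t in [0,oo), z = (z_d, z_b) in Z, u in [0,1]^N.\<close>
type_synonym point = "real \<times> (real \<times> real) \<times> (nat \<Rightarrow> real)"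

definition intensity :: "(real \<times> real) measure \<Rightarrow> point measure" where
  "intensity Pm = restrict_space lborel {0..} \<Otimes>\<^sub>M Pm \<Otimes>\<^sub>M
                   (\<Pi>\<^sub>M i\<in>(UNIV::nat set). uniform_measure lborel {0..1::real})"

definition solves_sde :: "real \<times> real \<Rightarrow> real \<Rightarrow> point set \<Rightarrow> (real \<Rightarrow> real) \<Rightarrow> bool" where
  "solves_sde \<gamma> N0 P n \<longleftrightarrow>
     cadlag_on_nonneg n \<and>
     (\<forall>t\<ge>0.
        set_integrable lborel {0..t} (\<lambda>s. snd \<gamma> - fst \<gamma> * n s) \<and>
        (\<lambda>p. snd (fst (snd p)) - fst (fst (snd p)) * left_lim n (fst p))
           summable_on {p\<in>P. fst p \<le> t} \<and>
        n t = N0 + (\<integral>s\<in>{0..t}. (snd \<gamma> - fst \<gamma> * n s) \<partial>lborel)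
              + (\<Sum>\<^sub>\<infinity>p\<in>{p\<in>P. fst p \<le> t}.
                    snd (fst (snd p)) - fst (fst (snd p)) * left_lim n (fst p)))"

definition zbar :: "(real \<Rightarrow> real) \<Rightarrow> point \<Rightarrow> real" where
  "zbar n p = snd (fst (snd p)) /
      ((1 - fst (fst (snd p))) * left_lim n (fst p) + snd (fst (snd p)))"

end

theory Submission
  imports Defs
begin

lemma compact_local_bound:
  fixes f :: "real \<Rightarrow> real"
  assumes "\<forall>x\<in>{a..b}. \<exists>e>0. \<exists>B. \<forall>y\<in>{a..b}. \<bar>y - x\<bar> < e \<longrightarrow> f y \<le> B"
  shows "\<exists>B. \<forall>y\<in>{a..b}. f y \<le> B"
proof -
  from assms obtain e B where eB: "\<forall>x\<in>{a..b}. e x > 0 \<and> (\<forall>y\<in>{a..b}. \<bar>y - x\<bar> < e x \<longrightarrow> f y \<le> B x)"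
    by metis
  have "{a..b} \<subseteq> (\<Union>x\<in>{a..b}. ball x (e x))"
    using eB by (auto simp: dist_real_def)
  then obtain C where C: "C \<subseteq> {a..b}" "finite C" "{a..b} \<subseteq> (\<Union>x\<in>C. ball x (e x))"
    using compactE_image[of "{a..b}" "{a..b}" "\<lambda>x. ball x (e x)"] by auto
  show ?thesis
  proof (intro exI ballI)
    fix y assume y: "y \<in> {a..b}"
    then obtain x where x: "x \<in> C" "y \<in> ball x (e x)" using C by auto
    then have "f y \<le> B x" using eB C y by (auto simp: dist_real_def abs_minus_commute)
    also have "B x \<le> Max (B ` C)" using x C by auto
    finally show "f y \<le> Max (B ` C)" .
  qed
qed

lemma cadlag_left_tendsto:
  assumes "cadlag_on_nonneg n" "y > 0"
  shows "(n \<longlongrightarrow> left_lim n y) (at_left y)"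
proof -
  obtain l where l: "(n \<longlongrightarrow> l) (at_left y)" using assms unfolding cadlag_on_nonneg_def by blast
  have "left_lim n y = l" using assms(2) l unfolding left_lim_def
    by (simp add: tendsto_Lim)
  then show ?thesis using l by simp
qed

lemma cadlag_right_tendsto:
  assumes "cadlag_on_nonneg n" "y \<ge> 0"
  shows "(n \<longlongrightarrow> n y) (at_right y)"
  using assms unfolding cadlag_on_nonneg_def continuous_within by blast

lemma left_lim_ge:
  assumes "cadlag_on_nonneg n" "y > 0" "a < y" "\<And>z. a < z \<Longrightarrow> z < y \<Longrightarrow> c \<le> n z"
  shows "c \<le> left_lim n y"
proof (rule tendsto_lowerbound[OF cadlag_left_tendsto[OF assms(1,2)]])
  show "\<forall>\<^sub>F x in at_left y. c \<le> n x"
    using eventually_at_left_real[OF assms(3)] by eventually_elim (use assms(4) in auto)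
qed simp

lemma left_lim_le:
  assumes "cadlag_on_nonneg n" "y > 0" "a < y" "\<And>z. a < z \<Longrightarrow> z < y \<Longrightarrow> n z \<le> c"
  shows "left_lim n y \<le> c"
proof (rule tendsto_upperbound[OF cadlag_left_tendsto[OF assms(1,2)]])
  show "\<forall>\<^sub>F x in at_left y. n x \<le> c"
    using eventually_at_left_real[OF assms(3)] by eventually_elim (use assms(4) in auto)
qed simp

lemma right_near:
  assumes "cadlag_on_nonneg n" "x \<ge> 0" "e > 0"
  shows "\<exists>d>0. \<forall>y. x \<le> y \<and> y < x + d \<longrightarrow> \<bar>n y - n x\<bar> < e"
proof -
  have "\<forall>\<^sub>F y in at_right x. dist (n y) (n x) < e"
    using cadlag_right_tendsto[OF assms(1,2)] assms(3) tendstoD by blast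
  then obtain b where b: "b > x" "\<And>y. y > x \<Longrightarrow> y < b \<Longrightarrow> dist (n y) (n x) < e"
    unfolding eventually_at_right_field by blast
  show ?thesis
  proof (intro exI[of _ "b - x"] conjI allI impI)
    fix y assume "x \<le> y \<and> y < x + (b - x)"
    then show "\<bar>n y - n x\<bar> < e" using b assms(3)
      by (cases "y = x") (auto simp: dist_real_def)
  qed (use b in auto)
qed

lemma left_near:
  assumes "cadlag_on_nonneg n" "x > 0" "e > 0"
  shows "\<exists>d>0. \<forall>y. x - d < y \<and> y < x \<longrightarrow> \<bar>n y - left_lim n x\<bar> < e"
proof -
  have "\<forall>\<^sub>F y in at_left x. dist (n y) (left_lim n x) < e"
    using cadlag_left_tendsto[OF assms(1,2)] assms(3) tendstoD by blast
  then obtain b where b: "b < x" "\<And>y. y > b \<Longrightarrow> y < x \<Longrightarrow> dist (n y) (left_lim n x) < e"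
    unfolding eventually_at_left_field by blast
  show ?thesis
  proof (intro exI[of _ "x - b"] conjI allI impI)
    fix y assume "x - (x - b) < y \<and> y < x"
    then show "\<bar>n y - left_lim n x\<bar> < e" using b
      by (auto simp: dist_real_def)
  qed (use b in auto)
qed

lemma cadlag_bounded:
  assumes "cadlag_on_nonneg n" "t \<ge> 0"
  shows "\<exists>C. \<forall>y\<in>{0..t}. \<bar>n y\<bar> \<le> C \<and> \<bar>left_lim n y\<bar> \<le> C"
proof -
  have "\<exists>B. \<forall>y\<in>{0..t}. max \<bar>n y\<bar> \<bar>left_lim n y\<bar> \<le> B"
  proof (rule compact_local_bound, intro ballI)
    fix x assume x: "x \<in> {0..t}"
    obtain d1 where d1: "d1 > 0" "\<forall>y. x \<le> y \<and> y < x + d1 \<longrightarrow> \<bar>n y - n x\<bar> < 1"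
      using right_near[OF assms(1), of x 1] x by auto
    obtain d2 where d2: "d2 > 0" "x > 0 \<longrightarrow> (\<forall>y. x - d2 < y \<and> y < x \<longrightarrow> \<bar>n y - left_lim n x\<bar> < 1)"
      using left_near[OF assms(1), of x 1] zero_less_one by (cases "x > 0") blast+
    define B where "B = \<bar>n x\<bar> + \<bar>left_lim n x\<bar> + \<bar>n 0\<bar> + 1"
    have bnd: "\<bar>n y\<bar> \<le> B" if "\<bar>y - x\<bar> < min d1 d2" "y \<ge> 0" for y
    proof (cases "y \<ge> x")
      case True then show ?thesis using d1 that unfolding B_def by fastforce
    next
      case False
      then have "x > 0" using that by auto
      then have "\<bar>n y - left_lim n x\<bar> < 1" using d2 that False by auto
      then show ?thesis unfolding B_def by linarith
    qed
    have "\<forall>y\<in>{0..t}. \<bar>y - x\<bar> < min d1 d2 \<longrightarrow> max \<bar>n y\<bar> \<bar>left_lim n y\<bar> \<le> B"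
    proof (intro ballI impI)
      fix y assume y: "y \<in> {0..t}" "\<bar>y - x\<bar> < min d1 d2"
      have "\<bar>left_lim n y\<bar> \<le> B"
      proof (cases "y > 0")
        case False
        then have "y = 0" using y by auto
        then show ?thesis using bnd[of 0] y by (simp add: left_lim_def)
      next
        case True
        define a where "a = max 0 (max (x - min d1 d2) (y - min d1 d2))"
        have a: "a < y" using True y d1 d2 unfolding a_def by auto
        have *: "\<bar>n z\<bar> \<le> B" if "a < z" "z < y" for z
        proof -
          have "\<bar>z - x\<bar> < min d1 d2" using that y unfolding a_def abs_less_iff by auto
          then show ?thesis using bnd[of z] that unfolding a_def by auto
        qed
        have "left_lim n y \<le> B" by (rule left_lim_le[OF assms(1) True a]) (use * in force)
        moreover have "- B \<le> left_lim n y" by (rule left_lim_ge[OF assms(1) True a]) (use * in force)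
        ultimately show ?thesis by auto
      qed
      then show "max \<bar>n y\<bar> \<bar>left_lim n y\<bar> \<le> B" using bnd[of y] y by auto
    qed
    moreover have "0 < min d1 d2" using d1 d2 by auto
    ultimately show "\<exists>e>0. \<exists>B. \<forall>y\<in>{0..t}. \<bar>y - x\<bar> < e \<longrightarrow> max \<bar>n y\<bar> \<bar>left_lim n y\<bar> \<le> B"
      by blast
  qed
  then show ?thesis by auto
qed


abbreviation zd :: "point \<Rightarrow> real" where "zd p \<equiv> fst (fst (snd p))"
abbreviation zb :: "point \<Rightarrow> real" where "zb p \<equiv> snd (fst (snd p))"

locale sde_path =
  fixes gd gb N0 :: real and P :: "point set" and n :: "real \<Rightarrow> real" and T :: real
  assumes gd: "gd \<ge> 0" and gb: "gb \<ge> 0" and N0: "N0 > 0" and T: "T \<ge> 0"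
  and cad: "cadlag_on_nonneg n"
  and Pspace: "\<forall>p\<in>P. fst p \<ge> 0 \<and> fst (snd p) \<in> Zset"
  and integ: "\<forall>s\<in>{0..T}. set_integrable lborel {0..s} (\<lambda>s. gb - gd * n s)"
  and jsum: "\<forall>s\<in>{0..T}. (\<lambda>p. zb p - zd p * left_lim n (fst p)) summable_on {p\<in>P. fst p \<le> s}"
  and eq: "\<forall>s\<in>{0..T}. n s = N0 + (\<integral>x\<in>{0..s}. (gb - gd * n x) \<partial>lborel)
              + (\<Sum>\<^sub>\<infinity>p\<in>{p\<in>P. fst p \<le> s}. zb p - zd p * left_lim n (fst p))"
  and zdsum: "zd summable_on {p\<in>P. fst p \<le> T}"
  and simple: "\<forall>p\<in>P. \<forall>q\<in>P. fst p \<le> T \<longrightarrow> fst p = fst q \<longrightarrow> zd p > 0 \<longrightarrow> zd q > 0 \<longrightarrow> p = q"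
begin

definition j :: "point \<Rightarrow> real" where "j p = zb p - zd p * left_lim n (fst p)"
definition g :: "real \<Rightarrow> real" where "g x = gb - gd * n x"

lemma Pfacts:
  assumes "p \<in> P"
  shows "fst p \<ge> 0" "0 \<le> zd p" "zd p \<le> 1" "0 \<le> zb p" "zd p = 1 \<Longrightarrow> zb p > 0"
  using Pspace assms unfolding Zset_def by (auto simp: less_le)

lemma jsum': "s \<in> {0..T} \<Longrightarrow> A \<subseteq> {p\<in>P. fst p \<le> s} \<Longrightarrow> j summable_on A"
  using jsum summable_on_subset_banach unfolding j_def by blast

lemma zdsum': "A \<subseteq> {p\<in>P. fst p \<le> T} \<Longrightarrow> zd summable_on A"
  using zdsum summable_on_subset_banach by blast

lemma integ': "s \<in> {0..T} \<Longrightarrow> A \<in> sets lborel \<Longrightarrow> A \<subseteq> {0..s} \<Longrightarrow> set_integrable lborel A g"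
  using integ set_integrable_subset unfolding g_def by blast

lemma eq': "s \<in> {0..T} \<Longrightarrow> n s = N0 + (\<integral>x\<in>{0..s}. g x \<partial>lborel) + (\<Sum>\<^sub>\<infinity>p\<in>{p\<in>P. fst p \<le> s}. j p)"
  using eq unfolding g_def j_def by auto

lemma bounded: obtains C where "C \<ge> 0" "\<And>y. y \<in> {0..T} \<Longrightarrow> \<bar>n y\<bar> \<le> C \<and> \<bar>left_lim n y\<bar> \<le> C"
proof -
  obtain C where "\<forall>y\<in>{0..T}. \<bar>n y\<bar> \<le> C \<and> \<bar>left_lim n y\<bar> \<le> C"
    using cadlag_bounded[OF cad T] by blast
  moreover have "C \<ge> 0" using calculation T by force
  ultimately show ?thesis using that by blast
qed

lemma incr:
  assumes "0 \<le> r" "r \<le> s" "s \<le> T"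
  shows "n s - n r = (\<integral>x\<in>{r<..s}. g x \<partial>lborel) + (\<Sum>\<^sub>\<infinity>p\<in>{p\<in>P. r < fst p \<and> fst p \<le> s}. j p)"
proof -
  have i1: "(\<integral>x\<in>{0..s}. g x \<partial>lborel) = (\<integral>x\<in>{0..r}. g x \<partial>lborel) + (\<integral>x\<in>{r<..s}. g x \<partial>lborel)"
  proof -
    have "{0..s} = {0..r} \<union> {r<..s}" using assms by auto
    moreover have "(\<integral>x\<in>{0..r} \<union> {r<..s}. g x \<partial>lborel) = (\<integral>x\<in>{0..r}. g x \<partial>lborel) + (\<integral>x\<in>{r<..s}. g x \<partial>lborel)"
      by (rule set_integral_Un) (use assms in \<open>auto intro!: integ'[of s]\<close>)
    ultimately show ?thesis by simp
  qed
  have s2: "(\<Sum>\<^sub>\<infinity>p\<in>{p\<in>P. fst p \<le> s}. j p) = (\<Sum>\<^sub>\<infinity>p\<in>{p\<in>P. fst p \<le> r}. j p) + (\<Sum>\<^sub>\<infinity>p\<in>{p\<in>P. r < fst p \<and> fst p \<le> s}. j p)"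
  proof -
    have "{p\<in>P. fst p \<le> s} = {p\<in>P. fst p \<le> r} \<union> {p\<in>P. r < fst p \<and> fst p \<le> s}" using assms by auto
    moreover have "(\<Sum>\<^sub>\<infinity>p\<in>{p\<in>P. fst p \<le> r} \<union> {p\<in>P. r < fst p \<and> fst p \<le> s}. j p) = (\<Sum>\<^sub>\<infinity>p\<in>{p\<in>P. fst p \<le> r}. j p) + (\<Sum>\<^sub>\<infinity>p\<in>{p\<in>P. r < fst p \<and> fst p \<le> s}. j p)"
      by (rule infsum_Un_disjoint) (use assms in \<open>auto intro!: jsum'[of s]\<close>)
    ultimately show ?thesis by simp
  qed
  show ?thesis using eq'[of s] eq'[of r] i1 s2 assms by auto
qed

lemma int_lower:
  assumes "0 \<le> a" "a \<le> b" "b \<le> T" "\<And>y. y \<in> {a<..b} \<Longrightarrow> c \<le> g y"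
  shows "c * (b - a) \<le> (\<integral>x\<in>{a<..b}. g x \<partial>lborel)"
proof -
  have ci: "set_integrable lborel {a<..b} (\<lambda>_. c)"
    by (rule set_integrable_subset[OF borel_integrable_atLeastAtMost'[of a b "\<lambda>_. c"]]) auto
  have "(\<integral>x\<in>{a<..b}. c \<partial>lborel) \<le> (\<integral>x\<in>{a<..b}. g x \<partial>lborel)"
    by (rule set_integral_mono[OF ci integ'[of b]]) (use assms in auto)
  moreover have "(\<integral>x\<in>{a<..b}. c \<partial>lborel) = c * (b - a)"
    using assms by (subst set_integral_const) auto
  ultimately show ?thesis by simp
qed

lemma int_upper:
  assumes "0 \<le> a" "a \<le> b" "b \<le> T" "\<And>y. y \<in> {a<..b} \<Longrightarrow> g y \<le> c"
  shows "(\<integral>x\<in>{a<..b}. g x \<partial>lborel) \<le> c * (b - a)"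
proof -
  have ci: "set_integrable lborel {a<..b} (\<lambda>_. c)"
    by (rule set_integrable_subset[OF borel_integrable_atLeastAtMost'[of a b "\<lambda>_. c"]]) auto
  have "(\<integral>x\<in>{a<..b}. g x \<partial>lborel) \<le> (\<integral>x\<in>{a<..b}. c \<partial>lborel)"
    by (rule set_integral_mono[OF integ'[of b] ci]) (use assms in auto)
  moreover have "(\<integral>x\<in>{a<..b}. c \<partial>lborel) = c * (b - a)"
    using assms by (subst set_integral_const) auto
  ultimately show ?thesis by simp
qed

lemma drop:
  assumes "0 \<le> r" "r \<le> s" "s \<le> T" "\<And>y. y \<in> {r..s} \<Longrightarrow> n y \<le> m"
  shows "n r - m * (gd * (s - r) + (\<Sum>\<^sub>\<infinity>p\<in>{p\<in>P. r < fst p \<and> fst p \<le> s}. zd p)) \<le> n s"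
proof -
  let ?A = "{p\<in>P. r < fst p \<and> fst p \<le> s}"
  have I: "(- gd * m) * (s - r) \<le> (\<integral>x\<in>{r<..s}. g x \<partial>lborel)"
  proof (rule int_lower)
    fix y assume "y \<in> {r<..s}"
    then have "n y \<le> m" using assms by auto
    then show "- gd * m \<le> g y" unfolding g_def using gd gb mult_left_mono[of "n y" m gd] by linarith
  qed (use assms in auto)
  have zA: "zd summable_on ?A" by (rule zdsum') (use assms in auto)
  then have zA': "(\<lambda>p. - zd p) summable_on ?A" by (simp add: summable_on_uminus)
  have "(\<Sum>\<^sub>\<infinity>p\<in>?A. - zd p * m) \<le> (\<Sum>\<^sub>\<infinity>p\<in>?A. j p)"
  proof (rule infsum_mono)
    show "(\<lambda>p. - zd p * m) summable_on ?A"
      by (rule summable_on_cmult_left[OF zA'])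
    show "j summable_on ?A" by (rule jsum'[of s]) (use assms in auto)
    fix p assume p: "p \<in> ?A"
    have "left_lim n (fst p) \<le> m"
      by (rule left_lim_le[OF cad _ _ , of _ r]) (use p assms in auto)
    then show "- zd p * m \<le> j p" unfolding j_def using Pfacts[of p] p mult_left_mono[of "left_lim n (fst p)" m "zd p"] by auto
  qed
  moreover have "(\<Sum>\<^sub>\<infinity>p\<in>?A. - zd p * m) = - (\<Sum>\<^sub>\<infinity>p\<in>?A. zd p) * m"
    using zA' by (subst infsum_cmult_left) (auto simp: infsum_uminus)
  ultimately show ?thesis using I incr[OF assms(1-3)] by (simp add: algebra_simps)
qed

end


context sde_path
begin

lemma j_abs_sum: "(\<lambda>p. \<bar>j p\<bar>) summable_on {p\<in>P. fst p \<le> T}"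
proof -
  have "j summable_on {p\<in>P. fst p \<le> T}" using jsum'[of T] T by auto
  then have "(\<lambda>p. norm (j p)) summable_on {p\<in>P. fst p \<le> T}"
    using summable_on_iff_abs_summable_on_real by blast
  then show ?thesis by (simp add: real_norm_def)
qed

lemma tail:
  assumes "0 < \<tau>" "\<tau> \<le> T" "\<epsilon> > 0"
  obtains r where "0 \<le> r" "r < \<tau>"
    "\<And>A. A \<subseteq> {p\<in>P. r < fst p \<and> fst p < \<tau>} \<Longrightarrow> \<bar>infsum j A\<bar> \<le> \<epsilon> \<and> infsum zd A \<le> \<epsilon>"
proof -
  define PT where "PT = {p\<in>P. fst p \<le> T}"
  define h where "h p = \<bar>j p\<bar> + zd p" for p
  have hs: "h summable_on PT" unfolding h_def PT_def
    by (rule summable_on_add[OF j_abs_sum zdsum])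
  have h0: "p \<in> PT \<Longrightarrow> 0 \<le> h p" for p using Pfacts[of p] unfolding h_def PT_def by auto
  obtain F where F: "finite F" "F \<subseteq> PT" "dist (sum h F) (infsum h PT) \<le> \<epsilon>"
    using infsum_finite_approximation[OF hs assms(3)] by blast
  have split: "infsum h PT = infsum h F + infsum h (PT - F)"
  proof -
    have "PT = F \<union> (PT - F)" using F by auto
    then have "infsum h PT = infsum h (F \<union> (PT - F))" by simp
    also have "\<dots> = infsum h F + infsum h (PT - F)"
      by (rule infsum_Un_disjoint[OF summable_on_subset_banach[OF hs] summable_on_subset_banach[OF hs]]) (use F in auto)
    finally show ?thesis .
  qed
  have rest: "infsum h (PT - F) \<le> \<epsilon>" using F(3) split F(1) by (simp add: dist_real_def)
  have key: "\<bar>infsum j A\<bar> \<le> \<epsilon> \<and> infsum zd A \<le> \<epsilon>" if A: "A \<subseteq> PT - F" for A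
  proof -
    have hAs: "h summable_on A" by (rule summable_on_subset_banach[OF hs]) (use A in auto)
    have hA: "infsum h A \<le> infsum h (PT - F)"
      by (rule infsum_mono_neutral[OF hAs summable_on_subset_banach[OF hs]]) (use A h0 in auto)
    have jA: "(\<lambda>p. \<bar>j p\<bar>) summable_on A" using A j_abs_sum summable_on_subset_banach unfolding PT_def by blast
    have zA: "zd summable_on A" using A zdsum' unfolding PT_def by blast
    have "\<bar>infsum j A\<bar> \<le> infsum (\<lambda>p. \<bar>j p\<bar>) A"
      using norm_infsum_bound[of j A] jA by (simp add: real_norm_def)
    also have "\<dots> \<le> infsum h A"
      by (rule infsum_mono[OF jA hAs]) (use A Pfacts in \<open>auto simp: h_def PT_def\<close>)
    finally have 1: "\<bar>infsum j A\<bar> \<le> infsum h A" .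
    have 2: "infsum zd A \<le> infsum h A"
      by (rule infsum_mono[OF zA hAs]) (auto simp: h_def)
    show ?thesis using 1 2 hA rest by linarith
  qed
  define r where "r = Max (insert (\<tau>/2) (fst ` {p\<in>F. fst p < \<tau>}))"
  have fin: "finite (insert (\<tau>/2) (fst ` {p\<in>F. fst p < \<tau>}))" using F by auto
  have r1: "r < \<tau>" unfolding r_def using fin assms by (subst Max_less_iff) auto
  have r2: "\<tau>/2 \<le> r" unfolding r_def using fin by (intro Max_ge) auto
  have r3: "fst p \<le> r" if "p \<in> F" "fst p < \<tau>" for p unfolding r_def using fin that by (intro Max_ge) auto
  show ?thesis
  proof (rule that[of r])
    show "0 \<le> r" using r2 assms by auto
    show "r < \<tau>" by (rule r1)
    fix A assume "A \<subseteq> {p\<in>P. r < fst p \<and> fst p < \<tau>}"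
    moreover have "{p\<in>P. r < fst p \<and> fst p < \<tau>} \<subseteq> PT - F"
    proof
      fix p assume p: "p \<in> {p\<in>P. r < fst p \<and> fst p < \<tau>}"
      then have "p \<notin> F" using r3[of p] by force
      then show "p \<in> PT - F" using p assms unfolding PT_def by auto
    qed
    ultimately show "\<bar>infsum j A\<bar> \<le> \<epsilon> \<and> infsum zd A \<le> \<epsilon>" using key by blast
  qed
qed

lemma jumpset:
  assumes "\<tau> \<in> {0..T}" "(\<lambda>p. zb p - zd p * v) summable_on {p\<in>P. fst p = \<tau>}"
  obtains d b where "0 \<le> d" "d \<le> 1" "0 \<le> b" "d = 1 \<Longrightarrow> b > 0"
    "b - d * v \<le> (\<Sum>\<^sub>\<infinity>p\<in>{p\<in>P. fst p = \<tau>}. zb p - zd p * v)"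
proof -
  define Q where "Q = {p\<in>P. fst p = \<tau>}"
  define f where "f = (\<lambda>p. zb p - zd p * v)"
  have fs: "f summable_on Q" using assms(2) unfolding f_def Q_def .
  show ?thesis
  proof (cases "\<exists>q\<in>Q. zd q > 0")
    case True
    then obtain q where q: "q \<in> Q" "zd q > 0" by blast
    have qP: "q \<in> P" "fst q = \<tau>" using q(1) unfolding Q_def by auto
    have others: "f p \<ge> 0" if p: "p \<in> Q - {q}" for p
    proof -
      have pP: "p \<in> P" "fst p = \<tau>" "p \<noteq> q" using p unfolding Q_def by auto
      have "\<not> zd p > 0"
      proof
        assume "zd p > 0"
        then have "q = p" using simple qP pP q(2) assms(1) by (metis atLeastAtMost_iff)
        then show False using pP(3) by simp
      qed
      then have "zd p = 0" using Pfacts(2)[OF pP(1)] by linarith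
      then show ?thesis unfolding f_def using Pfacts(4)[OF pP(1)] by simp
    qed
    have fq: "f summable_on {q}" by simp
    have fr: "f summable_on (Q - {q})" by (rule summable_on_subset_banach[OF fs]) auto
    have "Q = {q} \<union> (Q - {q})" using q by auto
    then have "infsum f Q = infsum f ({q} \<union> (Q - {q}))" by simp
    also have "\<dots> = infsum f {q} + infsum f (Q - {q})"
      by (rule infsum_Un_disjoint[OF fq fr]) simp
    finally have split: "infsum f Q = f q + infsum f (Q - {q})" by simp
    have "infsum f (Q - {q}) \<ge> 0" by (rule infsum_nonneg) (rule others)
    then have fle: "f q \<le> infsum f Q" using split by simp
    show ?thesis
    proof (rule that[of "zd q" "zb q"])
      show "0 \<le> zd q" "zd q \<le> 1" "0 \<le> zb q" using Pfacts[OF qP(1)] by auto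
      show "zd q = 1 \<Longrightarrow> 0 < zb q" using Pfacts(5)[OF qP(1)] by simp
      show "zb q - zd q * v \<le> (\<Sum>\<^sub>\<infinity>p\<in>{p\<in>P. fst p = \<tau>}. zb p - zd p * v)"
        using fle unfolding f_def Q_def by simp
    qed
  next
    case False
    have "0 \<le> infsum f Q"
    proof (rule infsum_nonneg)
      fix p assume p: "p \<in> Q"
      then have pP: "p \<in> P" unfolding Q_def by auto
      have "zd p = 0" using False p Pfacts(2)[OF pP] by force
      then show "0 \<le> f p" unfolding f_def using Pfacts(4)[OF pP] by simp
    qed
    then show ?thesis by (intro that[of 0 0]) (auto simp: f_def Q_def)
  qed
qed

lemma int_point: "(\<integral>x\<in>{0..0}. g x \<partial>lborel) = 0"
proof -
  have "(\<integral>x\<in>{0..0}. g x \<partial>lborel) = (\<integral>x. indicator {0::real} x *\<^sub>R g x \<partial>lborel)"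
    by (simp add: set_lebesgue_integral_def)
  also have "\<dots> = 0"
  proof (rule integral_eq_zero_AE)
    show "AE x in lborel. indicator {0::real} x *\<^sub>R g x = 0"
      using AE_lborel_singleton[of 0] by eventually_elim simp
  qed
  finally show ?thesis .
qed

lemma n0pos: "n 0 > 0"
proof -
  define Q where "Q = {p\<in>P. fst p = 0}"
  have P0: "{p\<in>P. fst p \<le> 0} = Q"
  proof
    show "{p\<in>P. fst p \<le> 0} \<subseteq> Q" unfolding Q_def using Pfacts(1) by fastforce
  qed (auto simp: Q_def)
  have jj: "j p = zb p - zd p * n 0" if "p \<in> Q" for p
    using that by (simp add: j_def left_lim_def Q_def)
  have js: "j summable_on Q" using jsum'[of 0] T P0 by simp
  have js': "(\<lambda>p. zb p - zd p * n 0) summable_on Q"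
    by (rule summable_on_cong[THEN iffD1, OF _ js]) (simp add: jj)
  obtain d b where db: "0 \<le> d" "d \<le> 1" "0 \<le> b" "b - d * n 0 \<le> (\<Sum>\<^sub>\<infinity>p\<in>Q. zb p - zd p * n 0)"
  proof (rule jumpset[of 0 "n 0"])
    show "0 \<in> {0..T}" using T by simp
    show "(\<lambda>p. zb p - zd p * n 0) summable_on {p\<in>P. fst p = 0}" using js' unfolding Q_def .
  qed (unfold Q_def[symmetric])
  have "(\<Sum>\<^sub>\<infinity>p\<in>Q. zb p - zd p * n 0) = infsum j Q"
    by (rule infsum_cong) (simp add: jj)
  moreover have "n 0 = N0 + 0 + infsum j Q" using eq'[of 0] T int_point P0 by simp
  ultimately have "n 0 \<ge> N0 + b - d * n 0" using db by linarith
  then have "n 0 * (1 + d) \<ge> N0 + b" by (simp add: algebra_simps)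
  then have "n 0 * (1 + d) > 0" using N0 db by linarith
  then show ?thesis using db by (simp add: zero_less_mult_iff)
qed

end


context sde_path
begin

lemma g_lower:
  assumes "C \<ge> 0" "\<And>y. y \<in> {0..T} \<Longrightarrow> \<bar>n y\<bar> \<le> C \<and> \<bar>left_lim n y\<bar> \<le> C" "y \<in> {0..T}"
  shows "- (gb + gd * C) \<le> g y"
proof -
  have "n y \<le> C" using assms(2)[OF assms(3)] by auto
  then have "gd * n y \<le> gd * C" using gd by (rule mult_left_mono)
  then show ?thesis unfolding g_def using gb by linarith
qed

lemma jumpineq:
  assumes "0 < \<tau>" "\<tau> \<le> T"
  shows "left_lim n \<tau> + infsum j {p\<in>P. fst p = \<tau>} \<le> n \<tau>"
proof (rule field_le_epsilon)
  fix e :: real assume e: "0 < e"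
  define \<epsilon> where "\<epsilon> = e / 3"
  have \<epsilon>: "\<epsilon> > 0" using e by (simp add: \<epsilon>_def)
  obtain C where C: "C \<ge> 0" "\<And>y. y \<in> {0..T} \<Longrightarrow> \<bar>n y\<bar> \<le> C \<and> \<bar>left_lim n y\<bar> \<le> C" using bounded by blast
  define Bg where "Bg = gb + gd * C"
  have Bg0: "Bg \<ge> 0" unfolding Bg_def using gb gd C by simp
  obtain r where r: "0 \<le> r" "r < \<tau>"
    "\<And>A. A \<subseteq> {p\<in>P. r < fst p \<and> fst p < \<tau>} \<Longrightarrow> \<bar>infsum j A\<bar> \<le> \<epsilon> \<and> infsum zd A \<le> \<epsilon>"
    using tail[OF assms \<epsilon>] by blast
  obtain \<delta> where \<delta>: "\<delta> > 0" "\<And>y. \<tau> - \<delta> < y \<and> y < \<tau> \<Longrightarrow> \<bar>n y - left_lim n \<tau>\<bar> < \<epsilon>"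
    using left_near[OF cad assms(1) \<epsilon>] by blast
  define s where "s = max (max r (\<tau> - \<delta>/2)) (\<tau> - \<epsilon>/(2*(Bg+1)))"
  have s0: "0 \<le> s" "r \<le> s" "\<tau> - \<delta> < s" unfolding s_def using r \<delta> by auto
  have s1: "s < \<tau>" unfolding s_def using r \<delta> \<epsilon> Bg0 by auto
  have "\<tau> - s \<le> \<epsilon>/(2*(Bg+1))" unfolding s_def by simp
  then have "(\<tau> - s) * Bg \<le> \<epsilon>/(2*(Bg+1)) * Bg" using Bg0 by (rule mult_right_mono)
  also have "\<epsilon>/(2*(Bg+1)) * Bg \<le> \<epsilon>" using Bg0 \<epsilon> by (simp add: field_simps)
  finally have s4: "(\<tau> - s) * Bg \<le> \<epsilon>" .
  have inc: "n \<tau> - n s = (\<integral>x\<in>{s<..\<tau>}. g x \<partial>lborel) + (\<Sum>\<^sub>\<infinity>p\<in>{p\<in>P. s < fst p \<and> fst p \<le> \<tau>}. j p)"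
    using incr[of s \<tau>] s0 s1 assms by auto
  have I: "(- Bg) * (\<tau> - s) \<le> (\<integral>x\<in>{s<..\<tau>}. g x \<partial>lborel)"
    by (rule int_lower) (use s0 s1 assms g_lower[OF C] in \<open>auto simp: Bg_def\<close>)
  define A where "A = {p\<in>P. s < fst p \<and> fst p < \<tau>}"
  define Q where "Q = {p\<in>P. fst p = \<tau>}"
  have "{p\<in>P. s < fst p \<and> fst p \<le> \<tau>} = A \<union> Q" unfolding A_def Q_def using s1 by auto
  moreover have "infsum j (A \<union> Q) = infsum j A + infsum j Q"
    by (rule infsum_Un_disjoint; (rule jsum'[of \<tau>])?) (use assms s0 in \<open>auto simp: A_def Q_def\<close>)
  ultimately have sp: "(\<Sum>\<^sub>\<infinity>p\<in>{p\<in>P. s < fst p \<and> fst p \<le> \<tau>}. j p) = infsum j A + infsum j Q" by simp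
  have "A \<subseteq> {p\<in>P. r < fst p \<and> fst p < \<tau>}" unfolding A_def using s0 by auto
  then have "\<bar>infsum j A\<bar> \<le> \<epsilon>" using r(3) by blast
  moreover have "\<bar>n s - left_lim n \<tau>\<bar> < \<epsilon>" using \<delta>(2)[of s] s0 s1 by auto
  ultimately have a1: "- \<epsilon> \<le> infsum j A" "left_lim n \<tau> - \<epsilon> < n s" by auto
  have "(- Bg) * (\<tau> - s) = - ((\<tau> - s) * Bg)" by simp
  then have a2: "- \<epsilon> \<le> (\<integral>x\<in>{s<..\<tau>}. g x \<partial>lborel)" using I s4 by linarith
  have "n \<tau> = n s + (\<integral>x\<in>{s<..\<tau>}. g x \<partial>lborel) + infsum j A + infsum j Q" using inc sp by linarith
  then show "left_lim n \<tau> + infsum j {p\<in>P. fst p = \<tau>} \<le> n \<tau> + e"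
    using a1 a2 unfolding Q_def \<epsilon>_def by linarith
qed

lemma leftpos:
  assumes "0 < \<tau>" "\<tau> \<le> T" "\<And>s. 0 \<le> s \<Longrightarrow> s < \<tau> \<Longrightarrow> n s > 0"
  shows "left_lim n \<tau> > 0"
proof -
  obtain C where C: "C \<ge> 0" "\<And>y. y \<in> {0..T} \<Longrightarrow> \<bar>n y\<bar> \<le> C \<and> \<bar>left_lim n y\<bar> \<le> C" using bounded by blast
  obtain r where r: "0 \<le> r" "r < \<tau>"
    "\<And>A. A \<subseteq> {p\<in>P. r < fst p \<and> fst p < \<tau>} \<Longrightarrow> \<bar>infsum j A\<bar> \<le> 1/8 \<and> infsum zd A \<le> 1/8"
    using tail[OF assms(1,2), of "1/8"] by auto
  define r' where "r' = max r (\<tau> - 1/(8*(gd+1)))"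
  have r'0: "0 \<le> r'" "r' < \<tau>" "r \<le> r'" unfolding r'_def using r gd by auto
  have "\<tau> - r' \<le> 1/(8*(gd+1))" unfolding r'_def by simp
  then have "gd * (\<tau> - r') \<le> gd * (1/(8*(gd+1)))" using gd by (rule mult_left_mono)
  also have "\<dots> \<le> 1/8" using gd by (simp add: field_simps)
  finally have r'1: "gd * (\<tau> - r') \<le> 1/8" .
  have nr: "n r' > 0" using assms(3) r'0 by auto
  have key: "n r' / 4 \<le> n s" if s: "r' \<le> s" "s < \<tau>" for s
  proof -
    define K where "K = {r'..s}"
    define m where "m = Sup (n ` K)"
    have Kne: "n ` K \<noteq> {}" unfolding K_def using s by auto
    have bdd: "bdd_above (n ` K)"
    proof (rule bdd_aboveI2)
      fix y assume "y \<in> K"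
      then have "y \<in> {0..T}" unfolding K_def using r'0 s assms by auto
      then show "n y \<le> C" using C(2)[of y] by auto
    qed
    have up: "n y \<le> m" if "y \<in> K" for y unfolding m_def using bdd that by (intro cSup_upper) auto
    have "n r' \<le> m" using up[of r'] s unfolding K_def by auto
    then have m0: "m > 0" using nr by auto
    then have "m / 2 < Sup (n ` K)" unfolding m_def[symmetric] by simp
    then obtain \<rho> where \<rho>: "\<rho> \<in> K" "m / 2 < n \<rho>" using less_cSup_iff[OF Kne bdd] by auto
    have \<rho>': "r' \<le> \<rho>" "\<rho> \<le> s" using \<rho> unfolding K_def by auto
    have dr: "n \<rho> - m * (gd * (s - \<rho>) + (\<Sum>\<^sub>\<infinity>p\<in>{p\<in>P. \<rho> < fst p \<and> fst p \<le> s}. zd p)) \<le> n s"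
      by (rule drop) (use \<rho>' r'0 s assms up in \<open>auto simp: K_def\<close>)
    have z: "(\<Sum>\<^sub>\<infinity>p\<in>{p\<in>P. \<rho> < fst p \<and> fst p \<le> s}. zd p) \<le> 1/8"
    proof -
      have "{p\<in>P. \<rho> < fst p \<and> fst p \<le> s} \<subseteq> {p\<in>P. r < fst p \<and> fst p < \<tau>}"
        using \<rho>' r'0 s by auto
      then show ?thesis using r(3) by blast
    qed
    have "gd * (s - \<rho>) \<le> gd * (\<tau> - r')" using gd \<rho>' s by (intro mult_left_mono) auto
    then have "gd * (s - \<rho>) + (\<Sum>\<^sub>\<infinity>p\<in>{p\<in>P. \<rho> < fst p \<and> fst p \<le> s}. zd p) \<le> 1/4"
      using r'1 z by linarith
    then have "m * (gd * (s - \<rho>) + (\<Sum>\<^sub>\<infinity>p\<in>{p\<in>P. \<rho> < fst p \<and> fst p \<le> s}. zd p)) \<le> m * (1/4)"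
      using m0 by (intro mult_left_mono) auto
    then show ?thesis using dr \<rho> \<open>n r' \<le> m\<close> by linarith
  qed
  have "n r' / 4 \<le> left_lim n \<tau>"
    by (rule left_lim_ge[OF cad assms(1) r'0(2)]) (use key in auto)
  then show ?thesis using nr by linarith
qed

end


context sde_path
begin

lemma pos_at:
  assumes "0 < \<tau>" "\<tau> \<le> T" "\<And>s. 0 \<le> s \<Longrightarrow> s < \<tau> \<Longrightarrow> n s > 0"
  shows "n \<tau> > 0 \<and> left_lim n \<tau> > 0"
proof -
  define L where "L = left_lim n \<tau>"
  have L: "L > 0" unfolding L_def by (rule leftpos[OF assms])
  define Q where "Q = {p\<in>P. fst p = \<tau>}"
  have jj: "j p = zb p - zd p * L" if "p \<in> Q" for p using that unfolding Q_def j_def L_def by simp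
  have js: "j summable_on Q" by (rule jsum'[of \<tau>]) (use assms in \<open>auto simp: Q_def\<close>)
  have js': "(\<lambda>p. zb p - zd p * L) summable_on Q"
    by (rule summable_on_cong[THEN iffD1, OF _ js]) (simp add: jj)
  obtain d b where db: "0 \<le> d" "d \<le> 1" "0 \<le> b" "d = 1 \<Longrightarrow> b > 0" "b - d * L \<le> (\<Sum>\<^sub>\<infinity>p\<in>Q. zb p - zd p * L)"
  proof (rule jumpset[of \<tau> L])
    show "\<tau> \<in> {0..T}" using assms by simp
    show "(\<lambda>p. zb p - zd p * L) summable_on {p\<in>P. fst p = \<tau>}" using js' unfolding Q_def .
  qed (unfold Q_def[symmetric], blast)
  have "(\<Sum>\<^sub>\<infinity>p\<in>Q. zb p - zd p * L) = infsum j Q"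
    by (rule infsum_cong) (simp add: jj)
  then have "L + b - d * L \<le> n \<tau>" using jumpineq[OF assms(1,2)] db(5) unfolding L_def Q_def by linarith
  moreover have "0 < L + b - d * L"
  proof (cases "d = 1")
    case True then show ?thesis using db L by simp
  next
    case False
    then have "0 < (1 - d) * L" using db L by simp
    then show ?thesis using db by (simp add: algebra_simps)
  qed
  ultimately show ?thesis using L unfolding L_def by linarith
qed

lemma pos: "s \<in> {0..T} \<Longrightarrow> n s > 0 \<and> left_lim n s > 0"
proof -
  define S where "S = {r\<in>{0..T}. \<forall>s\<in>{0..r}. n s > 0 \<and> left_lim n s > 0}"
  have 0: "0 \<in> S" unfolding S_def using n0pos T by (auto simp: left_lim_def)
  have bdd: "bdd_above S" unfolding S_def by (rule bdd_aboveI[of _ T]) auto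
  define \<tau> where "\<tau> = Sup S"
  have \<tau>0: "0 \<le> \<tau>" unfolding \<tau>_def using 0 bdd by (rule cSup_upper)
  have \<tau>T: "\<tau> \<le> T" unfolding \<tau>_def using 0 by (intro cSup_least) (auto simp: S_def)
  have below: "n s > 0 \<and> left_lim n s > 0" if "0 \<le> s" "s < \<tau>" for s
  proof -
    have "s < Sup S" using that unfolding \<tau>_def by simp
    then obtain r where "r \<in> S" "s < r" using less_cSup_iff[of S s] 0 bdd by auto
    then show ?thesis using that unfolding S_def by auto
  qed
  have \<tau>S: "\<tau> \<in> S"
  proof (cases "\<tau> = 0")
    case True then show ?thesis using 0 by simp
  next
    case False
    then have "\<tau> > 0" using \<tau>0 by simp
    then have pt: "n \<tau> > 0 \<and> left_lim n \<tau> > 0" using pos_at[OF _ \<tau>T] below by blast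
    have "n s > 0 \<and> left_lim n s > 0" if "s \<in> {0..\<tau>}" for s
      using that below pt by (cases "s = \<tau>") auto
    then show ?thesis unfolding S_def using \<tau>0 \<tau>T by auto
  qed
  have "\<tau> = T"
  proof (rule ccontr)
    assume "\<tau> \<noteq> T"
    then have lt: "\<tau> < T" using \<tau>T by simp
    have pt: "n \<tau> > 0" using \<tau>S unfolding S_def by auto
    obtain d where d: "d > 0" "\<And>y. \<tau> \<le> y \<and> y < \<tau> + d \<Longrightarrow> \<bar>n y - n \<tau>\<bar> < n \<tau> / 2"
      using right_near[OF cad \<tau>0, of "n \<tau> / 2"] pt by auto
    define \<tau>' where "\<tau>' = min T (\<tau> + d/2)"
    have \<tau>'1: "\<tau> < \<tau>'" unfolding \<tau>'_def using lt d by auto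
    have "n s > 0 \<and> left_lim n s > 0" if s: "s \<in> {0..\<tau>'}" for s
      proof (cases "s \<le> \<tau>")
        case True then show ?thesis using \<tau>S s unfolding S_def by auto
      next
        case False
        have near: "n z > n \<tau> / 2" if "\<tau> \<le> z" "z \<le> s" for z
        proof -
          have "z < \<tau> + d" using that s d unfolding \<tau>'_def by auto
          then have "\<bar>n z - n \<tau>\<bar> < n \<tau> / 2" using d(2)[of z] that by auto
          then show ?thesis by linarith
        qed
        have "n \<tau> / 2 \<le> left_lim n s"
        proof (rule left_lim_ge[OF cad])
          show "0 < s" "\<tau> < s" using False \<tau>0 by auto
          fix z assume "\<tau> < z" "z < s"
          then show "n \<tau> / 2 \<le> n z" using near[of z] by auto
        qed
        then show ?thesis using near[of s] False pt by auto
      qed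
    then have "\<tau>' \<in> S" unfolding S_def using \<tau>0 \<tau>'1 unfolding \<tau>'_def by auto
    then have "\<tau>' \<le> \<tau>" unfolding \<tau>_def using bdd by (rule cSup_upper)
    then show False using \<tau>'1 by simp
  qed
  then have "T \<in> S" using \<tau>S by simp
  then show "s \<in> {0..T} \<Longrightarrow> n s > 0 \<and> left_lim n s > 0" unfolding S_def by auto
qed

end


context sde_path
begin

lemma lower: obtains c where "c > 0" "\<And>s. s \<in> {0..T} \<Longrightarrow> c \<le> left_lim n s"
proof -
  have "\<exists>B. \<forall>y\<in>{0..T}. 1 / left_lim n y \<le> B"
  proof (rule compact_local_bound, intro ballI)
    fix x assume x: "x \<in> {0..T}"
    have px: "n x > 0" and lx: "left_lim n x > 0" using pos[OF x] by auto
    define cx where "cx = min (n x / 2) (left_lim n x / 2)"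
    have cx: "cx > 0" using px lx unfolding cx_def by auto
    have x0: "0 \<le> x" using x by simp
    have px2: "n x / 2 > 0" using px by simp
    obtain d1 where d1: "d1 > 0" "\<And>y. x \<le> y \<and> y < x + d1 \<Longrightarrow> \<bar>n y - n x\<bar> < n x / 2"
      using right_near[OF cad x0 px2] by blast
    obtain d2 where d2: "d2 > 0" "x > 0 \<longrightarrow> (\<forall>y. x - d2 < y \<and> y < x \<longrightarrow> \<bar>n y - left_lim n x\<bar> < left_lim n x / 2)"
    proof (cases "x > 0")
      case True
      have lx2: "left_lim n x / 2 > 0" using lx by simp
      obtain d where "d > 0" "\<And>y. x - d < y \<and> y < x \<Longrightarrow> \<bar>n y - left_lim n x\<bar> < left_lim n x / 2"
        using left_near[OF cad True lx2] by blast
      then show ?thesis using that[of d] by auto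
    next
      case False
      then show ?thesis using that[of 1] by simp
    qed
    have loc: "cx \<le> left_lim n y" if y: "y \<in> {0..T}" "\<bar>y - x\<bar> < min d1 d2" for y
    proof (cases y x rule: linorder_cases)
      case equal then show ?thesis unfolding cx_def using lx by simp
    next
      case greater
      show ?thesis
      proof (rule left_lim_ge[OF cad])
        show "0 < y" "x < y" using greater x by auto
        fix z assume z: "x < z" "z < y"
        then have "\<bar>n z - n x\<bar> < n x / 2" using d1(2)[of z] y by auto
        then show "cx \<le> n z" unfolding cx_def by linarith
      qed
    next
      case less
      then have x0: "x > 0" using y by auto
      have nearL: "left_lim n x / 2 < n z" if "x - d2 < z" "z < x" for z
      proof -
        have "\<bar>n z - left_lim n x\<bar> < left_lim n x / 2" using d2(2) x0 that by auto
        then show ?thesis by linarith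
      qed
      show ?thesis
      proof (cases "y = 0")
        case True
        then have "left_lim n y = n y" by (simp add: left_lim_def)
        moreover have "left_lim n x / 2 < n y" using nearL[of y] less y by auto
        ultimately show ?thesis unfolding cx_def by linarith
      next
        case False
        show ?thesis
        proof (rule left_lim_ge[OF cad])
          show "0 < y" using False y by auto
          show "x - d2 < y" using y by auto
          fix z assume z: "x - d2 < z" "z < y"
          then show "cx \<le> n z" using nearL[of z] less unfolding cx_def by auto
        qed
      qed
    qed
    have "1 / left_lim n y \<le> 1 / cx" if "y \<in> {0..T}" "\<bar>y - x\<bar> < min d1 d2" for y
    proof -
      have "cx \<le> left_lim n y" by (rule loc[OF that])
      then show ?thesis using cx by (intro divide_left_mono) auto
    qed
    moreover have "min d1 d2 > 0" using d1 d2 by auto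
    ultimately show "\<exists>e>0. \<exists>B. \<forall>y\<in>{0..T}. \<bar>y - x\<bar> < e \<longrightarrow> 1 / left_lim n y \<le> B" by blast
  qed
  then obtain B where B: "\<And>y. y \<in> {0..T} \<Longrightarrow> 1 / left_lim n y \<le> B" by blast
  have l0: "left_lim n 0 > 0" using pos[of 0] T by auto
  have "1 / left_lim n 0 \<le> B" using B[of 0] T by simp
  moreover have "1 / left_lim n 0 > 0" using l0 by simp
  ultimately have Bp: "B > 0" by linarith
  show ?thesis
  proof (rule that[of "1 / B"])
    show "1 / B > 0" using Bp by simp
    fix s assume s: "s \<in> {0..T}"
    have ls: "left_lim n s > 0" using pos[OF s] by auto
    have "1 / left_lim n s \<le> B" using B[OF s] .
    then show "1 / B \<le> left_lim n s" using ls Bp by (simp add: field_simps)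
  qed
qed

lemma final: "zbar n summable_on {p\<in>P. fst p \<le> T}"
proof -
  define PT where "PT = {p\<in>P. fst p \<le> T}"
  obtain C where C: "C \<ge> 0" "\<And>y. y \<in> {0..T} \<Longrightarrow> \<bar>n y\<bar> \<le> C \<and> \<bar>left_lim n y\<bar> \<le> C" using bounded by blast
  obtain c where c: "c > 0" "\<And>s. s \<in> {0..T} \<Longrightarrow> c \<le> left_lim n s" using lower by blast
  have PTt: "fst p \<in> {0..T}" if "p \<in> PT" for p using that Pfacts(1)[of p] unfolding PT_def by auto
  have zdC: "(\<lambda>p. zd p * C) summable_on PT" unfolding PT_def by (rule summable_on_cmult_left[OF zdsum])
  have "(\<lambda>p. norm (zd p * left_lim n (fst p))) summable_on PT"
  proof (rule summable_on_comparison_test[OF zdC])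
    fix p assume p: "p \<in> PT"
    have "\<bar>left_lim n (fst p)\<bar> \<le> C" using C(2)[OF PTt[OF p]] by auto
    moreover have "zd p \<ge> 0" using Pfacts(2)[of p] p unfolding PT_def by auto
    ultimately show "norm (zd p * left_lim n (fst p)) \<le> zd p * C"
      by (simp add: abs_mult mult_left_mono)
  qed simp
  then have s1: "(\<lambda>p. zd p * left_lim n (fst p)) summable_on PT"
    using summable_on_iff_abs_summable_on_real by blast
  have s2: "j summable_on PT" unfolding PT_def using jsum'[of T] T by auto
  have zbs: "zb summable_on PT"
  proof -
    have "(\<lambda>p. j p + zd p * left_lim n (fst p)) summable_on PT" by (rule summable_on_add[OF s2 s1])
    moreover have "j p + zd p * left_lim n (fst p) = zb p" for p unfolding j_def by simp
    ultimately show ?thesis by simp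
  qed
  define F where "F = {p\<in>PT. zd p > 1/2}"
  have finF: "finite F"
  proof (rule ccontr)
    assume inf: "infinite F"
    define S where "S = infsum zd PT"
    obtain G where G: "G \<subseteq> F" "finite G" "card G = nat \<lceil>2 * S\<rceil> + 1"
      using infinite_arbitrarily_large[OF inf] by blast
    have "real (card G) * (1/2) \<le> sum zd G"
      by (rule sum_bounded_below) (use G in \<open>auto simp: F_def\<close>)
    moreover have "sum zd G \<le> S" unfolding S_def
    proof (rule finite_sum_le_infsum)
      show "zd summable_on PT" using zdsum unfolding PT_def .
      show "finite G" by (rule G(2))
      show "G \<subseteq> PT" using G(1) unfolding F_def by auto
      fix x assume "x \<in> PT - G"
      then show "0 \<le> zd x" using Pfacts(2)[of x] unfolding PT_def by auto
    qed
    moreover have "real (card G) \<ge> 2 * S + 1"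
    proof -
      have "2 * S \<le> of_int \<lceil>2 * S\<rceil>" by (rule le_of_int_ceiling)
      also have "\<dots> \<le> real (nat \<lceil>2 * S\<rceil>)" by simp
      finally show ?thesis using G(3) by simp
    qed
    ultimately show False by linarith
  qed
  have sF: "zbar n summable_on F" using finF by simp
  have sR: "zbar n summable_on (PT - F)"
  proof (rule summable_on_comparison_test)
    show "(\<lambda>p. zb p * (2 / c)) summable_on (PT - F)"
      by (rule summable_on_cmult_left, rule summable_on_subset_banach[OF zbs]) auto
    fix p assume p: "p \<in> PT - F"
    have pP: "p \<in> P" using p unfolding PT_def by auto
    have zd2: "1 - zd p \<ge> 1/2" using p unfolding F_def by auto
    have ll: "left_lim n (fst p) \<ge> c" using c(2)[OF PTt] p by auto
    have "(1/2) * c \<le> (1 - zd p) * left_lim n (fst p)"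
      using zd2 ll c by (intro mult_mono) auto
    then have D: "c / 2 + zb p \<le> (1 - zd p) * left_lim n (fst p) + zb p" by simp
    have zb0: "zb p \<ge> 0" using Pfacts(4)[OF pP] .
    have Dp: "0 < (1 - zd p) * left_lim n (fst p) + zb p" using D zb0 c by linarith
    show "0 \<le> zbar n p" unfolding zbar_def using Dp zb0 by simp
    have "zbar n p \<le> zb p / (c / 2)"
      unfolding zbar_def using D zb0 c by (intro divide_left_mono) auto
    then show "zbar n p \<le> zb p * (2 / c)" by (simp add: field_simps)
  qed
  have "PT = F \<union> (PT - F)" unfolding F_def by auto
  moreover have "zbar n summable_on (F \<union> (PT - F))" by (rule summable_on_Un_disjoint[OF sF sR]) auto
  ultimately show ?thesis unfolding PT_def by simp
qed

end


lemma count_pred_sets: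
  assumes "X \<in> measurable M (count_space UNIV)"
  shows "{\<omega>\<in>space M. P (X \<omega>)} \<in> sets M"
proof -
  have "X -` {k. P k} \<inter> space M \<in> sets M" by (rule measurable_sets[OF assms]) simp
  moreover have "X -` {k. P k} \<inter> space M = {\<omega>\<in>space M. P (X \<omega>)}" by auto
  ultimately show ?thesis by simp
qed

lemma poisson_sums: "(\<lambda>k. real k * (l ^ k / fact k * exp (- l))) sums (l::real)"
proof -
  have "(\<lambda>n. (l * exp (- l)) * (l ^ n / fact n)) sums ((l * exp (- l)) * exp l)"
  proof (rule sums_mult)
    show "(\<lambda>n. l ^ n / fact n) sums exp l" using exp_converges[of l] by (simp add: divide_inverse_commute scaleR_conv_of_real)
  qed
  moreover have "(l * exp (- l)) * exp l = l" by (simp add: exp_minus field_simps)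
  ultimately have A: "(\<lambda>n. (l * exp (- l)) * (l ^ n / fact n)) sums l" by simp
  have B: "real (Suc n) * (l ^ Suc n / fact (Suc n) * exp (- l)) = (l * exp (- l)) * (l ^ n / fact n)" for n
  proof -
    have f: "(fact (Suc n)::real) = real (Suc n) * fact n" by (simp only: fact_Suc of_nat_mult)
    have p: "real (Suc n) > 0" "(fact n :: real) > 0" by auto
    show ?thesis unfolding f using p by (simp only: power_Suc) (simp add: field_simps del: of_nat_Suc)
  qed
  have "(\<lambda>n. real (Suc n) * (l ^ Suc n / fact (Suc n) * exp (- l))) sums l" unfolding B by (rule A)
  then show ?thesis by (subst (asm) sums_Suc_iff) simp
qed

lemma poisson_mean:
  assumes M: "prob_space M" and X: "X \<in> measurable M (count_space UNIV)" and l: "l \<ge> 0"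
    and dist: "\<And>k. measure M {\<omega>\<in>space M. X \<omega> = k} = l ^ k / fact k * exp (- l)"
  shows "(\<integral>\<^sup>+\<omega>. of_nat (X \<omega>) \<partial>M) = ennreal l"
proof -
  interpret prob_space M by (rule M)
  define S where "S k = {\<omega>\<in>space M. X \<omega> = k}" for k
  have S: "S k \<in> sets M" for k unfolding S_def by (rule count_pred_sets[OF X])
  have pt: "(of_nat (X \<omega>) :: ennreal) = (\<Sum>k. of_nat k * indicator (S k) \<omega>)" if "\<omega> \<in> space M" for \<omega>
  proof -
    have "(\<lambda>k. of_nat k * indicator (S k) \<omega> :: ennreal) = (\<lambda>k. if k = X \<omega> then of_nat k else 0)"
      using that by (auto simp: S_def fun_eq_iff)
    moreover have "(\<lambda>k. if k = X \<omega> then of_nat k else 0 :: ennreal) sums of_nat (X \<omega>)"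
      by (rule sums_single)
    ultimately show ?thesis by (simp add: sums_iff)
  qed
  have "(\<integral>\<^sup>+\<omega>. of_nat (X \<omega>) \<partial>M) = (\<integral>\<^sup>+\<omega>. (\<Sum>k. of_nat k * indicator (S k) \<omega>) \<partial>M)"
    by (rule nn_integral_cong) (simp add: pt)
  also have "\<dots> = (\<Sum>k. \<integral>\<^sup>+\<omega>. of_nat k * indicator (S k) \<omega> \<partial>M)"
    by (rule nn_integral_suminf) (use S in auto)
  also have "\<dots> = (\<Sum>k. ennreal (real k * (l ^ k / fact k * exp (- l))))"
  proof (rule suminf_cong)
    fix k
    have "(\<integral>\<^sup>+\<omega>. of_nat k * indicator (S k) \<omega> \<partial>M) = of_nat k * emeasure M (S k)"
      using S by (simp add: nn_integral_cmult_indicator)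
    also have "\<dots> = ennreal (real k) * ennreal (l ^ k / fact k * exp (- l))"
      using dist[of k] by (simp add: emeasure_eq_measure S_def ennreal_of_nat_eq_real_of_nat)
    also have "\<dots> = ennreal (real k * (l ^ k / fact k * exp (- l)))"
      by (rule ennreal_mult[symmetric]) (use l in auto)
    finally show "(\<integral>\<^sup>+\<omega>. of_nat k * indicator (S k) \<omega> \<partial>M) = ennreal (real k * (l ^ k / fact k * exp (- l)))" .
  qed
  also have "\<dots> = ennreal l"
    by (rule suminf_ennreal_eq[OF _ poisson_sums]) (use l in auto)
  finally show ?thesis .
qed

lemma poisson_ge2:
  assumes M: "prob_space M" and X: "X \<in> measurable M (count_space UNIV)" and l: "l \<ge> 0"
    and dist: "\<And>k. measure M {\<omega>\<in>space M. X \<omega> = k} = l ^ k / fact k * exp (- l)"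
  shows "measure M {\<omega>\<in>space M. 2 \<le> X \<omega>} \<le> l\<^sup>2"
proof -
  interpret prob_space M by (rule M)
  define S0 where "S0 = {\<omega>\<in>space M. X \<omega> = 0}"
  define S1 where "S1 = {\<omega>\<in>space M. X \<omega> = 1}"
  have S01: "S0 \<in> sets M" "S1 \<in> sets M" unfolding S0_def S1_def by (auto intro: count_pred_sets[OF X])
  have eq: "{\<omega>\<in>space M. 2 \<le> X \<omega>} = space M - (S0 \<union> S1)" unfolding S0_def S1_def by auto
  have "measure M (S0 \<union> S1) = measure M S0 + measure M S1"
    by (rule finite_measure_Union[OF S01]) (auto simp: S0_def S1_def)
  also have "\<dots> = exp (- l) + l * exp (- l)" using dist[of 0] dist[of 1] unfolding S0_def S1_def by simp
  finally have m: "measure M (S0 \<union> S1) = (1 + l) * exp (- l)" by (simp add: algebra_simps)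
  have "measure M {\<omega>\<in>space M. 2 \<le> X \<omega>} = 1 - (1 + l) * exp (- l)"
    unfolding eq using S01 m by (subst prob_compl) auto
  also have "\<dots> \<le> l\<^sup>2"
  proof -
    have "1 - l \<le> exp (- l)" using exp_ge_add_one_self[of "- l"] by simp
    then have "(1 + l) * (1 - l) \<le> (1 + l) * exp (- l)" using l by (intro mult_left_mono) auto
    then show ?thesis by (simp add: power2_eq_square algebra_simps)
  qed
  finally show ?thesis .
qed


abbreviation UU :: "(nat \<Rightarrow> real) measure" where
  "UU \<equiv> (\<Pi>\<^sub>M i\<in>(UNIV::nat set). uniform_measure lborel {0..1::real})"
abbreviation LL :: "real measure" where
  "LL \<equiv> restrict_space lborel {0..}"

lemma probU: "prob_space UU"
  by (rule prob_space_PiM) (rule prob_space_uniform_measure, auto)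

lemma sfU: "sigma_finite_measure UU"
proof -
  interpret prob_space UU by (rule probU)
  show ?thesis by unfold_locales
qed

lemma sfL: "sigma_finite_measure LL"
  by (rule sigma_finite_measure_restrict_space) (auto simp: lborel.sigma_finite_measure_axioms)

lemma emeasure_LL: "0 \<le> a \<Longrightarrow> emeasure LL {a..b} = ennreal (b - a)"
  by (subst emeasure_restrict_space) (auto, cases "a \<le> b", auto simp: ennreal_neg)

lemma sets_LL: "0 \<le> a \<Longrightarrow> {a..b} \<in> sets LL"
  by (subst sets_restrict_space_iff) auto

locale char_setup =
  fixes \<gamma> :: "real \<times> real" and Pm :: "(real \<times> real) measure"
  assumes char: "characteristic \<gamma> Pm"
begin

lemma sets_Pm: "sets Pm = sets (restrict_space borel Zset)"
  using char unfolding characteristic_def by auto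

lemma space_Pm: "space Pm = Zset"
  using sets_eq_imp_space_eq[OF sets_Pm] by (simp add: space_restrict_space)

lemma sf_Pm: "sigma_finite_measure Pm"
  using char unfolding characteristic_def by auto

lemma sets_PmI: "S \<in> sets borel \<Longrightarrow> Zset \<inter> S \<in> sets Pm"
  unfolding sets_Pm sets_restrict_space by auto

lemma space_mu: "space (intensity Pm) = {0..} \<times> (Zset \<times> space UU)"
  unfolding intensity_def by (simp add: space_pair_measure space_Pm)

lemma rect:
  assumes "0 \<le> a" "B \<in> sets Pm"
  shows "{a..b} \<times> (B \<times> space UU) \<in> sets (intensity Pm)"
    and "emeasure (intensity Pm) ({a..b} \<times> (B \<times> space UU)) = ennreal (b - a) * emeasure Pm B"
proof -
  interpret U: prob_space UU by (rule probU)
  have sfPU: "sigma_finite_measure (Pm \<Otimes>\<^sub>M UU)" by (rule sigma_finite_pair_measure[OF sf_Pm sfU])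
  have BU: "B \<times> space UU \<in> sets (Pm \<Otimes>\<^sub>M UU)" using assms(2) by auto
  show "{a..b} \<times> (B \<times> space UU) \<in> sets (intensity Pm)"
    unfolding intensity_def using BU sets_LL[OF assms(1)] by auto
  have "emeasure (Pm \<Otimes>\<^sub>M UU) (B \<times> space UU) = emeasure Pm B * emeasure UU (space UU)"
    by (rule sigma_finite_measure.emeasure_pair_measure_Times[OF sfU assms(2)]) simp
  then have e1: "emeasure (Pm \<Otimes>\<^sub>M UU) (B \<times> space UU) = emeasure Pm B" by (simp add: U.emeasure_space_1)
  have "emeasure (intensity Pm) ({a..b} \<times> (B \<times> space UU)) = emeasure LL {a..b} * emeasure (Pm \<Otimes>\<^sub>M UU) (B \<times> space UU)"
    unfolding intensity_def
    by (rule sigma_finite_measure.emeasure_pair_measure_Times[OF sfPU sets_LL[OF assms(1)] BU])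
  then show "emeasure (intensity Pm) ({a..b} \<times> (B \<times> space UU)) = ennreal (b - a) * emeasure Pm B"
    using e1 emeasure_LL[OF assms(1)] by simp
qed

lemma int_fst: "(\<integral>\<^sup>+ z. ennreal (fst z) \<partial>Pm) < \<infinity>"
proof -
  have "integrable Pm fst" using char unfolding characteristic_def by auto
  then have "(\<integral>\<^sup>+ z. ennreal (norm (fst z)) \<partial>Pm) < \<infinity>" by (simp add: integrable_iff_bounded)
  moreover have "(\<integral>\<^sup>+ z. ennreal (norm (fst z)) \<partial>Pm) = (\<integral>\<^sup>+ z. ennreal (fst z) \<partial>Pm)"
    by (rule nn_integral_cong) (auto simp: space_Pm Zset_def)
  ultimately show ?thesis by simp
qed

lemma fst_meas: "(\<lambda>z. ennreal (fst z)) \<in> borel_measurable Pm"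
proof -
  have "fst \<in> borel_measurable Pm" using char unfolding characteristic_def by auto
  then show ?thesis by measurable
qed

end


lemma fst_Ioc_borel: "{z::real\<times>real. a < fst z \<and> fst z \<le> b} \<in> sets borel"
proof -
  have o: "open {z::real\<times>real. a < fst z}" by (intro open_Collect_less continuous_intros)
  have c: "closed {z::real\<times>real. fst z \<le> b}" by (intro closed_Collect_le continuous_intros)
  have "{z::real\<times>real. a < fst z \<and> fst z \<le> b} = {z. a < fst z} \<inter> {z. fst z \<le> b}" by auto
  then show ?thesis using borel_open[OF o] borel_closed[OF c] by auto
qed

lemma fst_ge_borel: "{z::real\<times>real. c \<le> fst z} \<in> sets borel"
proof -
  have "closed {z::real\<times>real. c \<le> fst z}" by (intro closed_Collect_le continuous_intros)
  then show ?thesis by (rule borel_closed)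
qed

lemma ennreal_term_le_suminf: "f k \<le> (\<Sum>i. f i :: ennreal)"
proof -
  have "sum f {k} \<le> suminf f" by (rule sum_le_suminf) (auto intro: summableI)
  then show ?thesis by simp
qed

lemma dyadic_exists:
  assumes "0 < z" "z \<le> (1::real)"
  shows "\<exists>k. (1/2)^(Suc k) < z \<and> z \<le> (1/2)^k"
proof -
  obtain N where N: "(1/2::real)^N < z" using real_arch_pow_inv[OF assms(1), of "1/2"] by auto
  define k0 where "k0 = (LEAST k. (1/2::real)^k < z)"
  have k0: "(1/2::real)^k0 < z" unfolding k0_def by (rule LeastI[of _ N]) (rule N)
  have k0pos: "k0 \<noteq> 0" using k0 assms by (cases k0) auto
  then obtain k where k: "k0 = Suc k" by (cases k0) auto
  have "\<not> (1/2::real)^k < z" using not_less_Least[of k "\<lambda>k. (1/2::real)^k < z"] k unfolding k0_def by auto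
  then show ?thesis using k0 k by (intro exI[of _ k]) auto
qed

locale ppp = char_setup +
  fixes M :: "'w measure" and \<xi> :: "'w \<Rightarrow> point set"
  assumes pp: "poisson_point_process M (intensity Pm) \<xi>"
begin

lemma probM: "prob_space M" using pp unfolding poisson_point_process_def by auto

lemma xi_space: "\<omega> \<in> space M \<Longrightarrow> \<xi> \<omega> \<subseteq> space (intensity Pm)"
  using pp unfolding poisson_point_process_def by auto

lemma xi_pt: "\<omega> \<in> space M \<Longrightarrow> p \<in> \<xi> \<omega> \<Longrightarrow> fst p \<ge> 0 \<and> fst (snd p) \<in> Zset \<and> snd (snd p) \<in> space UU"
  using xi_space[of \<omega>] space_mu by (auto simp: mem_Times_iff)

context
  fixes A assumes A: "A \<in> sets (intensity Pm)" "emeasure (intensity Pm) A < \<infinity>"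
begin

lemma pp_fin: "AE \<omega> in M. finite (\<xi> \<omega> \<inter> A)"
  using pp A unfolding poisson_point_process_def by auto

lemma pp_meas: "(\<lambda>\<omega>. card (\<xi> \<omega> \<inter> A)) \<in> measurable M (count_space UNIV)"
  using pp A unfolding poisson_point_process_def by auto

lemma pp_dist: "measure M {\<omega>\<in>space M. card (\<xi> \<omega> \<inter> A) = k} = measure (intensity Pm) A ^ k / fact k * exp (- measure (intensity Pm) A)"
  using pp A unfolding poisson_point_process_def by auto

lemma pp_mean: "(\<integral>\<^sup>+\<omega>. of_nat (card (\<xi> \<omega> \<inter> A)) \<partial>M) = emeasure (intensity Pm) A"
proof -
  have "(\<integral>\<^sup>+\<omega>. of_nat (card (\<xi> \<omega> \<inter> A)) \<partial>M) = ennreal (measure (intensity Pm) A)"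
    by (rule poisson_mean[OF probM pp_meas _ pp_dist]) simp
  then show ?thesis using A(2) by (simp add: emeasure_eq_ennreal_measure)
qed

lemma pp_ge2: "measure M {\<omega>\<in>space M. 2 \<le> card (\<xi> \<omega> \<inter> A)} \<le> (measure (intensity Pm) A)\<^sup>2"
  by (rule poisson_ge2[OF probM pp_meas _ pp_dist]) simp

end

end


context ppp
begin

definition Bk :: "nat \<Rightarrow> (real \<times> real) set" where
  "Bk k = {z\<in>Zset. (1/2)^(Suc k) < fst z \<and> fst z \<le> (1/2)^k}"

lemma Bk_sets: "Bk k \<in> sets Pm"
proof -
  have e: "Bk k = Zset \<inter> {z. (1/2)^(Suc k) < fst z \<and> fst z \<le> (1/2::real)^k}" unfolding Bk_def by auto
  show ?thesis unfolding e by (rule sets_PmI[OF fst_Ioc_borel])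
qed

lemma Bk_disj: "disjoint_family Bk"
unfolding disjoint_family_on_def
proof (intro ballI impI)
  fix k k' :: nat assume "k \<noteq> k'"
  show "Bk k \<inter> Bk k' = {}"
  proof (rule ccontr)
    assume "Bk k \<inter> Bk k' \<noteq> {}"
    then obtain z where z: "z \<in> Bk k" "z \<in> Bk k'" by auto
    have *: False if "a < b" "z \<in> Bk a" "z \<in> Bk b" for a b
    proof -
      have "(1/2::real)^b \<le> (1/2)^(Suc a)" using that(1) by (intro power_decreasing) auto
      then show False using that(2,3) unfolding Bk_def by auto
    qed
    show False using \<open>k \<noteq> k'\<close> *[of k k'] *[of k' k] z by (cases "k < k'") auto
  qed
qed

lemma Wsum: "(\<Sum>k. ennreal ((1/2)^k) * emeasure Pm (Bk k)) < \<infinity>"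
proof -
  have meas: "(\<lambda>z. ennreal ((1/2)^k) * indicator (Bk k) z) \<in> borel_measurable Pm" for k
    using Bk_sets by measurable
  have "(\<Sum>k. ennreal ((1/2)^k) * emeasure Pm (Bk k)) = (\<Sum>k. \<integral>\<^sup>+z. ennreal ((1/2)^k) * indicator (Bk k) z \<partial>Pm)"
    using Bk_sets by (simp add: nn_integral_cmult_indicator)
  also have "\<dots> = (\<integral>\<^sup>+z. (\<Sum>k. ennreal ((1/2)^k) * indicator (Bk k) z) \<partial>Pm)"
    by (rule nn_integral_suminf[symmetric]) (rule meas)
  also have "\<dots> \<le> (\<integral>\<^sup>+z. 2 * ennreal (fst z) \<partial>Pm)"
  proof (rule nn_integral_mono)
    fix z assume "z \<in> space Pm"
    have tm: "ennreal ((1/2)^k) * indicator (Bk k) z \<le> (2 * ennreal (fst z)) * indicator (Bk k) z" for k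
    proof (cases "z \<in> Bk k")
      case True
      then have "(1/2::real)^k \<le> 2 * fst z" unfolding Bk_def by auto
      then have "ennreal ((1/2)^k) \<le> ennreal (2 * fst z)" by (rule ennreal_leI)
      moreover have fz: "0 \<le> fst z" using True unfolding Bk_def Zset_def by auto
      moreover have "ennreal (2 * fst z) = 2 * ennreal (fst z)" using fz by (subst ennreal_mult'') auto
      ultimately show ?thesis using True by simp
    qed simp
    have "(\<Sum>k. ennreal ((1/2)^k) * indicator (Bk k) z) \<le> (\<Sum>k. (2 * ennreal (fst z)) * indicator (Bk k) z)"
      by (rule suminf_le[OF tm]) (auto intro: summableI)
    also have "\<dots> = (2 * ennreal (fst z)) * (\<Sum>k. indicator (Bk k) z)" by (rule ennreal_suminf_cmult)
    also have "(\<Sum>k. indicator (Bk k) z :: ennreal) = indicator (\<Union>k. Bk k) z" by (rule suminf_indicator[OF Bk_disj])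
    also have "(2 * ennreal (fst z)) * (indicator (\<Union>k. Bk k) z :: ennreal) \<le> 2 * ennreal (fst z)"
      by (auto simp: indicator_def)
    finally show "(\<Sum>k. ennreal ((1/2)^k) * indicator (Bk k) z) \<le> 2 * ennreal (fst z)" .
  qed
  also have "\<dots> = 2 * (\<integral>\<^sup>+z. ennreal (fst z) \<partial>Pm)"
    by (rule nn_integral_cmult) (rule fst_meas)
  also have "\<dots> < \<infinity>" using int_fst by (simp add: ennreal_mult_less_top)
  finally show ?thesis .
qed

lemma Bk_fin: "emeasure Pm (Bk k) < \<infinity>"
proof -
  have "ennreal ((1/2)^k) * emeasure Pm (Bk k) < \<infinity>"
    using ennreal_term_le_suminf[of "\<lambda>k. ennreal ((1/2)^k) * emeasure Pm (Bk k)" k] Wsum by (simp add: le_less_trans)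
  then have "emeasure Pm (Bk k) = 0 \<or> emeasure Pm (Bk k) < \<top>" by (simp add: ennreal_mult_less_top)
  then show ?thesis by auto
qed

lemma zd_summable:
  assumes t: "t \<ge> 0"
  shows "AE \<omega> in M. (\<lambda>p. fst (fst (snd p))) summable_on {p\<in>\<xi> \<omega>. fst p \<le> t}"
proof -
  define Ak where "Ak k = {0..t} \<times> (Bk k \<times> space UU)" for k
  have Ak_sets: "Ak k \<in> sets (intensity Pm)" for k unfolding Ak_def using rect(1)[of 0 "Bk k" t] Bk_sets by simp
  have Ak_meas: "emeasure (intensity Pm) (Ak k) = ennreal t * emeasure Pm (Bk k)" for k
    unfolding Ak_def using rect(2)[of 0 "Bk k" t] Bk_sets by simp
  have Ak_fin: "emeasure (intensity Pm) (Ak k) < \<infinity>" for k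
    using Ak_meas Bk_fin by (simp add: ennreal_mult_less_top)
  define \<Phi> where "\<Phi> \<omega> = (\<Sum>k. ennreal ((1/2)^k) * of_nat (card (\<xi> \<omega> \<inter> Ak k)))" for \<omega>
  have cm: "(\<lambda>\<omega>. ennreal ((1/2)^k) * of_nat (card (\<xi> \<omega> \<inter> Ak k))) \<in> borel_measurable M" for k
  proof -
    have "(\<lambda>\<omega>. card (\<xi> \<omega> \<inter> Ak k)) \<in> measurable M (count_space UNIV)" by (rule pp_meas[OF Ak_sets Ak_fin])
    moreover have "(\<lambda>n::nat. ennreal ((1/2)^k) * of_nat n) \<in> measurable (count_space UNIV) borel" by simp
    ultimately show ?thesis by (rule measurable_compose)
  qed
  have \<Phi>m: "\<Phi> \<in> borel_measurable M" unfolding \<Phi>_def by (rule borel_measurable_suminf_order) (rule cm)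
  have "(\<integral>\<^sup>+\<omega>. \<Phi> \<omega> \<partial>M) = (\<Sum>k. \<integral>\<^sup>+\<omega>. ennreal ((1/2)^k) * of_nat (card (\<xi> \<omega> \<inter> Ak k)) \<partial>M)"
    unfolding \<Phi>_def by (rule nn_integral_suminf) (rule cm)
  also have "\<dots> = (\<Sum>k. ennreal ((1/2)^k) * emeasure (intensity Pm) (Ak k))"
  proof (rule suminf_cong)
    fix k
    have m: "(\<lambda>\<omega>. of_nat (card (\<xi> \<omega> \<inter> Ak k)) :: ennreal) \<in> borel_measurable M"
      using measurable_compose[OF pp_meas[OF Ak_sets Ak_fin], of "\<lambda>n. of_nat n :: ennreal" borel] by simp
    show "(\<integral>\<^sup>+\<omega>. ennreal ((1/2)^k) * of_nat (card (\<xi> \<omega> \<inter> Ak k)) \<partial>M) = ennreal ((1/2)^k) * emeasure (intensity Pm) (Ak k)"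
      by (subst nn_integral_cmult[OF m]) (simp add: pp_mean[OF Ak_sets Ak_fin])
  qed
  also have "\<dots> = ennreal t * (\<Sum>k. ennreal ((1/2)^k) * emeasure Pm (Bk k))"
    unfolding Ak_meas by (subst ennreal_suminf_cmult[symmetric]) (simp add: mult.assoc mult.left_commute)
  also have "\<dots> < \<infinity>" using Wsum by (simp add: ennreal_mult_less_top)
  finally have "(\<integral>\<^sup>+\<omega>. \<Phi> \<omega> \<partial>M) \<noteq> \<infinity>" by simp
  then have AE1: "AE \<omega> in M. \<Phi> \<omega> \<noteq> \<infinity>" by (rule nn_integral_PInf_AE[OF \<Phi>m])
  have "\<forall>k. AE \<omega> in M. finite (\<xi> \<omega> \<inter> Ak k)" using pp_fin[OF Ak_sets Ak_fin] by blast
  then have AE2: "AE \<omega> in M. \<forall>k. finite (\<xi> \<omega> \<inter> Ak k)" by (simp add: AE_all_countable)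
  show ?thesis
    using AE1 AE2 AE_space
  proof eventually_elim
    case (elim \<omega>)
    let ?S = "{p\<in>\<xi> \<omega>. fst p \<le> t}"
    have pt: "ennreal (fst (fst (snd p))) \<le> (\<Sum>k. ennreal ((1/2)^k) * indicator (Ak k) p)" if p: "p \<in> ?S" for p
    proof -
      have pf: "fst p \<ge> 0" "fst (snd p) \<in> Zset" "snd (snd p) \<in> space UU" using xi_pt[OF elim(3)] p by auto
      show ?thesis
      proof (cases "fst (fst (snd p)) = 0")
        case True then show ?thesis by simp
      next
        case False
        then have "0 < fst (fst (snd p))" "fst (fst (snd p)) \<le> 1" using pf(2) unfolding Zset_def by (auto simp: less_le)
        then obtain k where k: "(1/2)^(Suc k) < fst (fst (snd p))" "fst (fst (snd p)) \<le> (1/2)^k"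
          using dyadic_exists by blast
        have "p \<in> Ak k" unfolding Ak_def Bk_def mem_Times_iff using k pf p by simp
        then have "ennreal (fst (fst (snd p))) \<le> ennreal ((1/2)^k) * indicator (Ak k) p"
          using k by (simp add: ennreal_leI)
        also have "\<dots> \<le> (\<Sum>k. ennreal ((1/2)^k) * indicator (Ak k) p)" by (rule ennreal_term_le_suminf)
        finally show ?thesis .
      qed
    qed
    show ?case
    proof (rule nonneg_bdd_above_summable_on)
      show "\<And>p. p \<in> ?S \<Longrightarrow> 0 \<le> fst (fst (snd p))"
        using xi_pt[OF elim(3)] unfolding Zset_def by auto
      show "bdd_above (sum (\<lambda>p. fst (fst (snd p))) ` {F. F \<subseteq> ?S \<and> finite F})"
      proof (rule bdd_aboveI2[of _ _ "enn2real (\<Phi> \<omega>)"])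
        fix G assume G: "G \<in> {F. F \<subseteq> ?S \<and> finite F}"
        have nn: "\<And>p. p \<in> G \<Longrightarrow> 0 \<le> fst (fst (snd p))" using G xi_pt[OF elim(3)] unfolding Zset_def by auto
        have "ennreal (sum (\<lambda>p. fst (fst (snd p))) G) = (\<Sum>p\<in>G. ennreal (fst (fst (snd p))))"
          using nn by (rule sum_ennreal[symmetric])
        also have "\<dots> \<le> (\<Sum>p\<in>G. \<Sum>k. ennreal ((1/2)^k) * indicator (Ak k) p)"
          by (rule sum_mono) (use G pt in auto)
        also have "\<dots> = (\<Sum>k. \<Sum>p\<in>G. ennreal ((1/2)^k) * indicator (Ak k) p)"
          by (rule suminf_sum[symmetric]) (auto intro: summableI)
        also have "\<dots> = (\<Sum>k. ennreal ((1/2)^k) * of_nat (card (G \<inter> Ak k)))"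
        proof (rule suminf_cong)
          fix k
          have "(\<Sum>p\<in>G. ennreal ((1/2)^k) * indicator (Ak k) p) = ennreal ((1/2)^k) * (\<Sum>p\<in>G. indicator (Ak k) p)"
            by (simp add: sum_distrib_left)
          also have "(\<Sum>p\<in>G. indicator (Ak k) p :: ennreal) = of_nat (card (G \<inter> Ak k))"
          proof -
            have fG: "finite G" using G by auto
            have "(\<Sum>p\<in>G. indicator (Ak k) p :: ennreal) = (\<Sum>p\<in>G \<inter> Ak k. 1)"
              using fG by (simp add: sum.inter_restrict indicator_def)
            then show ?thesis by simp
          qed
          finally show "(\<Sum>p\<in>G. ennreal ((1/2)^k) * indicator (Ak k) p) = ennreal ((1/2)^k) * of_nat (card (G \<inter> Ak k))" .
        qed
        also have "\<dots> \<le> \<Phi> \<omega>" unfolding \<Phi>_def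
        proof (rule suminf_le)
          fix k
          have "card (G \<inter> Ak k) \<le> card (\<xi> \<omega> \<inter> Ak k)" using G elim(2) by (intro card_mono) auto
          then show "ennreal ((1/2)^k) * of_nat (card (G \<inter> Ak k)) \<le> ennreal ((1/2)^k) * of_nat (card (\<xi> \<omega> \<inter> Ak k))"
            by (intro mult_left_mono) auto
        qed (auto intro: summableI)
        finally have "ennreal (sum (\<lambda>p. fst (fst (snd p))) G) \<le> \<Phi> \<omega>" .
        then show "sum (\<lambda>p. fst (fst (snd p))) G \<le> enn2real (\<Phi> \<omega>)"
        proof -
          have "enn2real (ennreal (sum (\<lambda>p. fst (fst (snd p))) G)) \<le> enn2real (\<Phi> \<omega>)"
            by (rule enn2real_mono[OF \<open>ennreal (sum (\<lambda>p. fst (fst (snd p))) G) \<le> \<Phi> \<omega>\<close>]) (use elim(1) in \<open>simp add: top.not_eq_extremum\<close>)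
          moreover have "sum (\<lambda>p. fst (fst (snd p))) G \<ge> 0" using nn by (rule sum_nonneg)
          ultimately show ?thesis by simp
        qed
      qed
    qed
  qed
qed

end


lemma interval_pick:
  fixes s t :: real
  assumes "0 \<le> s" "s \<le> t"
  shows "\<exists>i<Suc m. real i * t / real (Suc m) \<le> s \<and> s \<le> real (Suc i) * t / real (Suc m)"
proof (cases "t = 0")
  case True
  then show ?thesis using assms by (intro exI[of _ 0]) auto
next
  case False
  then have t: "t > 0" using assms by auto
  define x where "x = s * real (Suc m) / t"
  have x0: "0 \<le> x" unfolding x_def using assms t by auto
  have sx: "s = x * t / real (Suc m)" unfolding x_def using t by (simp add: field_simps del: of_nat_Suc)
  define k where "k = nat \<lfloor>x\<rfloor>"
  have k1: "real k \<le> x" unfolding k_def using x0 by linarith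
  have k2: "x < real k + 1" unfolding k_def using x0 by linarith
  show ?thesis
  proof (cases "k < Suc m")
    case True
    have "real k * t / real (Suc m) \<le> s" unfolding sx using k1 t by (intro divide_right_mono mult_right_mono) auto
    moreover have "s \<le> real (Suc k) * t / real (Suc m)" unfolding sx using k2 t
      by (intro divide_right_mono mult_right_mono) auto
    ultimately show ?thesis using True by blast
  next
    case False
    then have "x \<ge> real (Suc m)" using k1 by (metis not_less of_nat_le_iff order.trans)
    then have "s \<ge> t" unfolding x_def using t by (simp add: field_simps del: of_nat_Suc)
    then have st: "s = t" using assms by auto
    have "real m * t / real (Suc m) \<le> t" using t by (simp add: field_simps del: of_nat_Suc)
    moreover have "real (Suc m) * t / real (Suc m) = t" by simp
    ultimately show ?thesis using st by (intro exI[of _ m]) auto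
  qed
qed

context ppp
begin

lemma good_B:
  assumes t: "t \<ge> 0" and B: "B \<in> sets Pm" "emeasure Pm B < \<infinity>"
  shows "AE \<omega> in M. \<forall>p\<in>\<xi> \<omega>. \<forall>q\<in>\<xi> \<omega>. fst p \<le> t \<longrightarrow> fst p = fst q \<longrightarrow> fst (snd p) \<in> B \<longrightarrow> fst (snd q) \<in> B \<longrightarrow> p = q"
proof -
  interpret M: prob_space M by (rule probM)
  define W where "W = {0..t} \<times> (B \<times> space UU)"
  have W: "W \<in> sets (intensity Pm)" "emeasure (intensity Pm) W < \<infinity>"
    unfolding W_def using rect[OF _ B(1), of 0 t] B(2) by (auto simp: ennreal_mult_less_top)
  have AEW: "AE \<omega> in M. finite (\<xi> \<omega> \<inter> W)" by (rule pp_fin[OF W])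
  define bB where "bB = measure Pm B"
  have bB0: "bB \<ge> 0" unfolding bB_def by simp
  have PmB: "emeasure Pm B = ennreal bB" unfolding bB_def using B(2) by (simp add: emeasure_eq_ennreal_measure)
  define A where "A m i = {real i * t / real (Suc m) .. real (Suc i) * t / real (Suc m)} \<times> (B \<times> space UU)" for m i :: nat
  have lo: "0 \<le> real i * t / real (Suc m)" for i m using t by simp
  have A_sets: "A m i \<in> sets (intensity Pm)" for m i unfolding A_def by (rule rect(1)[OF lo B(1)])
  have len: "real (Suc i) * t / real (Suc m) - real i * t / real (Suc m) = t / real (Suc m)" for i m
    by (simp only: of_nat_Suc[of i]) (simp add: field_simps del: of_nat_Suc)
  have A_em: "emeasure (intensity Pm) (A m i) = ennreal (t / real (Suc m) * bB)" for m i
  proof -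
    have "0 \<le> t / real (Suc m)" using t by simp
    then have "ennreal (t / real (Suc m)) * ennreal bB = ennreal (t / real (Suc m) * bB)"
      using bB0 by (rule ennreal_mult[symmetric])
    then show ?thesis unfolding A_def rect(2)[OF lo B(1)] len PmB .
  qed
  have A_fin: "emeasure (intensity Pm) (A m i) < \<infinity>" for m i using A_em by simp
  have A_meas: "measure (intensity Pm) (A m i) = t / real (Suc m) * bB" for m i
    using A_em t bB0 by (intro measure_eq_emeasure_eq_ennreal) auto
  define Ev where "Ev m i = {\<omega>\<in>space M. 2 \<le> card (\<xi> \<omega> \<inter> A m i)}" for m i
  have Ev_sets: "Ev m i \<in> sets M" for m i unfolding Ev_def by (rule count_pred_sets[OF pp_meas[OF A_sets A_fin]])
  have Ev_meas: "measure M (Ev m i) \<le> (t / real (Suc m) * bB)\<^sup>2" for m i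
    unfolding Ev_def using pp_ge2[OF A_sets A_fin, of m i] A_meas by simp
  define E where "E m = (\<Union>i\<in>{..<Suc m}. Ev m i)" for m
  have E_sets: "E m \<in> sets M" for m unfolding E_def using Ev_sets by auto
  have E_meas: "measure M (E m) \<le> (t * bB)\<^sup>2 / real (Suc m)" for m
  proof -
    have "measure M (E m) \<le> (\<Sum>i\<in>{..<Suc m}. measure M (Ev m i))"
      unfolding E_def by (rule M.finite_measure_subadditive_finite) (use Ev_sets in auto)
    also have "\<dots> \<le> (\<Sum>i\<in>{..<Suc m}. (t / real (Suc m) * bB)\<^sup>2)" by (rule sum_mono) (rule Ev_meas)
    also have "\<dots> = (t * bB)\<^sup>2 / real (Suc m)" by (simp add: power2_eq_square field_simps del: of_nat_Suc)
    finally show ?thesis .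
  qed
  define N where "N = (\<Inter>m. E m)"
  have N_sets: "N \<in> sets M" unfolding N_def using E_sets by auto
  have N_le: "measure M N \<le> (t * bB)\<^sup>2 / real (Suc m)" for m
  proof -
    have "measure M N \<le> measure M (E m)" unfolding N_def by (rule M.finite_measure_mono) (use E_sets in auto)
    then show ?thesis using E_meas[of m] by linarith
  qed
  have lim: "(\<lambda>m. (t * bB)\<^sup>2 / real (Suc m)) \<longlonglongrightarrow> 0"
    using LIMSEQ_Suc[OF lim_const_over_n[of "(t * bB)\<^sup>2"]] by simp
  have "measure M N \<le> 0" by (rule LIMSEQ_le_const[OF lim]) (use N_le in auto)
  then have "measure M N = 0" by (simp add: measure_nonneg antisym)
  then have N_null: "N \<in> null_sets M" using N_sets by (simp add: M.emeasure_eq_measure null_setsI)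
  have AE2: "AE \<omega> in M. finite (\<xi> \<omega> \<inter> W) \<longrightarrow> (\<forall>p\<in>\<xi> \<omega>. \<forall>q\<in>\<xi> \<omega>. fst p \<le> t \<longrightarrow> fst p = fst q \<longrightarrow> fst (snd p) \<in> B \<longrightarrow> fst (snd q) \<in> B \<longrightarrow> p = q)"
  proof (rule AE_I'[OF N_null], rule subsetI)
    fix \<omega> assume "\<omega> \<in> {\<omega>\<in>space M. \<not> (finite (\<xi> \<omega> \<inter> W) \<longrightarrow> (\<forall>p\<in>\<xi> \<omega>. \<forall>q\<in>\<xi> \<omega>. fst p \<le> t \<longrightarrow> fst p = fst q \<longrightarrow> fst (snd p) \<in> B \<longrightarrow> fst (snd q) \<in> B \<longrightarrow> p = q))}"
    then obtain p q where \<omega>: "\<omega> \<in> space M" "finite (\<xi> \<omega> \<inter> W)" and pq: "p \<in> \<xi> \<omega>" "q \<in> \<xi> \<omega>" "fst p \<le> t" "fst p = fst q"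
      "fst (snd p) \<in> B" "fst (snd q) \<in> B" "p \<noteq> q" by blast
    have pf: "fst p \<ge> 0" "snd (snd p) \<in> space UU" using xi_pt[OF \<omega>(1) pq(1)] by auto
    have qf: "fst q \<ge> 0" "snd (snd q) \<in> space UU" using xi_pt[OF \<omega>(1) pq(2)] by auto
    have "\<omega> \<in> E m" for m
    proof -
      obtain i where i: "i < Suc m" "real i * t / real (Suc m) \<le> fst p" "fst p \<le> real (Suc i) * t / real (Suc m)"
        using interval_pick[OF pf(1) pq(3), of m] by blast
      have pA: "p \<in> A m i" unfolding A_def mem_Times_iff using i pq pf by simp
      have qA: "q \<in> A m i" unfolding A_def mem_Times_iff using i pq qf by simp
      have "real (Suc i) * t / real (Suc m) \<le> t"
      proof -
        have "real (Suc i) \<le> real (Suc m)" using i(1) by simp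
        then have "real (Suc i) * t \<le> real (Suc m) * t" using t by (rule mult_right_mono)
        then show ?thesis by (simp add: field_simps del: of_nat_Suc)
      qed
      then have AW: "A m i \<subseteq> W" unfolding A_def W_def using lo[of i m] by auto
      have fin: "finite (\<xi> \<omega> \<inter> A m i)" by (rule finite_subset[OF _ \<omega>(2)]) (use AW in auto)
      have "card {p, q} \<le> card (\<xi> \<omega> \<inter> A m i)" using pA qA pq fin by (intro card_mono) auto
      then have "2 \<le> card (\<xi> \<omega> \<inter> A m i)" using pq(7) by simp
      then have "\<omega> \<in> Ev m i" unfolding Ev_def using \<omega>(1) by simp
      then show ?thesis unfolding E_def using i(1) by auto
    qed
    then show "\<omega> \<in> N" unfolding N_def by auto
  qed
  show ?thesis using AEW AE2 by eventually_elim blast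
qed

end


theorem lemma6p1:
  fixes \<gamma> :: "real \<times> real" and Pm :: "(real \<times> real) measure" and N0 :: real
    and M :: "'w measure" and \<xi> :: "'w \<Rightarrow> point set" and N :: "'w \<Rightarrow> real \<Rightarrow> real"
  assumes "characteristic \<gamma> Pm"
    and "N0 > 0"
    and "poisson_point_process M (intensity Pm) \<xi>"
    and "\<forall>t\<ge>0. (\<lambda>\<omega>. N \<omega> t) \<in> borel_measurable M"
    and "AE \<omega> in M. solves_sde \<gamma> N0 (\<xi> \<omega>) (N \<omega>)"
    and "t \<ge> 0"
  shows "AE \<omega> in M. (zbar (N \<omega>)) summable_on {p\<in>\<xi> \<omega>. fst p \<le> t}"
proof -
  interpret ppp \<gamma> Pm M \<xi>
    using assms(1,3) by (simp add: ppp_def char_setup_def ppp_axioms_def)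
  have g: "fst \<gamma> \<ge> 0" "snd \<gamma> \<ge> 0" using assms(1) unfolding characteristic_def by auto
  define Bq where "Bq k = {z\<in>Zset. 1 / real (Suc k) \<le> fst z}" for k
  have Bq_sets: "Bq k \<in> sets Pm" for k
  proof -
    have e: "Bq k = Zset \<inter> {z. 1 / real (Suc k) \<le> fst z}" unfolding Bq_def by auto
    show ?thesis unfolding e by (rule sets_PmI[OF fst_ge_borel])
  qed
  have Bq_fin: "emeasure Pm (Bq k) < \<infinity>" for k
  proof -
    have "emeasure Pm (Bq k) = (\<integral>\<^sup>+z. indicator (Bq k) z \<partial>Pm)"
      using Bq_sets by (simp add: nn_integral_indicator)
    also have "\<dots> \<le> (\<integral>\<^sup>+z. ennreal (real (Suc k)) * ennreal (fst z) \<partial>Pm)"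
    proof (rule nn_integral_mono)
      fix z assume z: "z \<in> space Pm"
      show "indicator (Bq k) z \<le> ennreal (real (Suc k)) * ennreal (fst z)"
      proof (cases "z \<in> Bq k")
        case True
        then have "1 / real (Suc k) \<le> fst z" unfolding Bq_def by auto
        then have "1 \<le> real (Suc k) * fst z" by (simp add: field_simps del: of_nat_Suc)
        then have "ennreal 1 \<le> ennreal (real (Suc k) * fst z)" by (rule ennreal_leI)
        have e: "ennreal (real (Suc k) * fst z) = ennreal (real (Suc k)) * ennreal (fst z)"
          by (rule ennreal_mult'') (use True in \<open>auto simp: Bq_def Zset_def\<close>)
        have "indicator (Bq k) z = (1::ennreal)" using True by simp
        also have "\<dots> = ennreal 1" by simp
        also have "\<dots> \<le> ennreal (real (Suc k) * fst z)" by fact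
        also have "\<dots> = ennreal (real (Suc k)) * ennreal (fst z)" by (rule e)
        finally show ?thesis .
      qed simp
    qed
    also have "\<dots> = ennreal (real (Suc k)) * (\<integral>\<^sup>+z. ennreal (fst z) \<partial>Pm)"
      by (rule nn_integral_cmult) (rule fst_meas)
    also have "\<dots> < \<infinity>" using int_fst by (simp add: ennreal_mult_less_top)
    finally show ?thesis .
  qed
  have AE1: "AE \<omega> in M. (\<lambda>p. fst (fst (snd p))) summable_on {p\<in>\<xi> \<omega>. fst p \<le> t}"
    by (rule zd_summable[OF assms(6)])
  have "\<forall>k. AE \<omega> in M. \<forall>p\<in>\<xi> \<omega>. \<forall>q\<in>\<xi> \<omega>. fst p \<le> t \<longrightarrow> fst p = fst q \<longrightarrow> fst (snd p) \<in> Bq k \<longrightarrow> fst (snd q) \<in> Bq k \<longrightarrow> p = q"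
    using good_B[OF assms(6) Bq_sets Bq_fin] by blast
  then have AE2: "AE \<omega> in M. \<forall>k. \<forall>p\<in>\<xi> \<omega>. \<forall>q\<in>\<xi> \<omega>. fst p \<le> t \<longrightarrow> fst p = fst q \<longrightarrow> fst (snd p) \<in> Bq k \<longrightarrow> fst (snd q) \<in> Bq k \<longrightarrow> p = q"
    by (simp add: AE_all_countable)
  show ?thesis
    using AE1 AE2 assms(5) AE_space
  proof eventually_elim
    case (elim \<omega>)
    have sde: "solves_sde \<gamma> N0 (\<xi> \<omega>) (N \<omega>)" by (rule elim(3))
    have path: "sde_path (fst \<gamma>) (snd \<gamma>) N0 (\<xi> \<omega>) (N \<omega>) t"
    proof (unfold_locales)
      show "0 \<le> fst \<gamma>" "0 \<le> snd \<gamma>" using g by auto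
      show "0 < N0" by (rule assms(2))
      show "0 \<le> t" by (rule assms(6))
      show "cadlag_on_nonneg (N \<omega>)" using sde unfolding solves_sde_def by auto
      show "\<forall>p\<in>\<xi> \<omega>. 0 \<le> fst p \<and> fst (snd p) \<in> Zset" using xi_pt[OF elim(4)] by auto
      show "\<forall>s\<in>{0..t}. set_integrable lborel {0..s} (\<lambda>s. snd \<gamma> - fst \<gamma> * N \<omega> s)"
        using sde unfolding solves_sde_def by auto
      show "\<forall>s\<in>{0..t}. (\<lambda>p. snd (fst (snd p)) - fst (fst (snd p)) * left_lim (N \<omega>) (fst p)) summable_on {p \<in> \<xi> \<omega>. fst p \<le> s}"
        using sde unfolding solves_sde_def by auto
      show "\<forall>s\<in>{0..t}. N \<omega> s = N0 + (\<integral>x\<in>{0..s}. (snd \<gamma> - fst \<gamma> * N \<omega> x) \<partial>lborel)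
              + (\<Sum>\<^sub>\<infinity>p\<in>{p\<in>\<xi> \<omega>. fst p \<le> s}. snd (fst (snd p)) - fst (fst (snd p)) * left_lim (N \<omega>) (fst p))"
        using sde unfolding solves_sde_def by auto
      show "(\<lambda>p. fst (fst (snd p))) summable_on {p \<in> \<xi> \<omega>. fst p \<le> t}" by (rule elim(1))
      show "\<forall>p\<in>\<xi> \<omega>. \<forall>q\<in>\<xi> \<omega>. fst p \<le> t \<longrightarrow> fst p = fst q \<longrightarrow> 0 < fst (fst (snd p)) \<longrightarrow> 0 < fst (fst (snd q)) \<longrightarrow> p = q"
      proof (intro ballI impI)
        fix p q assume p: "p \<in> \<xi> \<omega>" and q: "q \<in> \<xi> \<omega>" and pq: "fst p \<le> t" "fst p = fst q"
          and zp: "0 < fst (fst (snd p))" and zq: "0 < fst (fst (snd q))"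
        have "0 < min (fst (fst (snd p))) (fst (fst (snd q)))" using zp zq by simp
        then obtain k where k: "inverse (real (Suc k)) < min (fst (fst (snd p))) (fst (fst (snd q)))"
          using reals_Archimedean by blast
        have "fst (snd p) \<in> Bq k" "fst (snd q) \<in> Bq k"
          using k xi_pt[OF elim(4) p] xi_pt[OF elim(4) q] unfolding Bq_def by (auto simp: inverse_eq_divide)
        then show "p = q" using elim(2) p q pq by blast
      qed
    qed
    show ?case by (rule sde_path.final[OF path])
  qed
qed


end
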